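(* Let $a<b$ be real numbers and let $\{\psi_N(z)\}_{N=1,2,3,\dots}$ be a sequence of holomorphic functions on a domain $D\subset\mathbb{C}$ containing the closed interval $[a,b]$, converging uniformly on $D$ to a holomorphic function $\psi(z)$. Assume $\Re\psi(a)<0$ and $\Re\psi(b)<0$. Put $R_+:=\{z\in D:\Im z\ge0,\ \Re\psi(z)<2\pi\Im z\}$ and $R_-:=\{z\in D:\Im z\le0,\ \Re\psi(z)<-2\pi\Im z\}$, and assume that there are paths $C_{\pm}\subset R_{\pm}$ connecting $a$ and $b$ such that each $C_\pm$ is homotopic to $[a,b]$ in $D$ with $a$ and $b$ fixed. Then there exists $\varepsilon>0$ independent of $N$ such that \[ \frac1N\sum_{k\in\mathbb{Z},\ a\le k/N\le b}e^{N\psi_N(k/N)}=\int_a^b e^{N\psi_N(z)}\,dz+O(e^{-\varepsilon N})\qquad(N\to\infty). \] *)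

theory Defs
  imports "HOL-Complex_Analysis.Complex_Analysis"
begin

definition region_plus :: "complex set \<Rightarrow> (complex \<Rightarrow> complex) \<Rightarrow> complex set" where
  "region_plus D \<psi> = {z \<in> D. Im z \<ge> 0 \<and> Re (\<psi> z) < 2 * pi * Im z}"

definition region_minus :: "complex set \<Rightarrow> (complex \<Rightarrow> complex) \<Rightarrow> complex set" where
  "region_minus D \<psi> = {z \<in> D. Im z \<le> 0 \<and> Re (\<psi> z) < - 2 * pi * Im z}"

definition lattice_sum :: "real \<Rightarrow> real \<Rightarrow> nat \<Rightarrow> (complex \<Rightarrow> complex) \<Rightarrow> complex" where
  "lattice_sum a b N f =
     (1 / of_nat N) * (\<Sum>k\<in>{k::int. a \<le> real_of_int k / real N \<and> real_of_int k / real N \<le> b}.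
        exp (of_nat N * f (complex_of_real (real_of_int k / real N))))"

end

theory Submission
  imports Defs "HOL-Complex_Analysis.Complex_Analysis"
begin

lemma exp_half_lattice:
  fixes N :: nat and k :: int
  assumes "N > 0"
  shows "exp (- 2 * of_real pi * \<i> * of_nat N * complex_of_real ((real_of_int k - 1/2) / real N)) = -1"
proof -
  have "exp (- 2 * of_real pi * \<i> * of_nat N * complex_of_real ((real_of_int k - 1/2) / real N))
        = exp (\<i> * (of_int (-k) * (of_real pi * 2)) + \<i> * of_real pi)"
    using assms by (intro arg_cong[where f=exp]) (simp add: complex_eq_iff field_simps)
  also have "\<dots> = -1" by (simp only: exp_add exp_2pi_1_int exp_pi_i') simp
  finally show ?thesis .
qed

lemma exp_lattice:
  fixes N :: nat and k :: int
  assumes "N > 0"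
  shows "exp (2 * of_real pi * \<i> * of_nat N * complex_of_real (real_of_int k / real N)) = 1"
proof -
  have "exp (2 * of_real pi * \<i> * of_nat N * complex_of_real (real_of_int k / real N))
        = exp (\<i> * (of_int k * (of_real pi * 2)))"
    using assms by (intro arg_cong[where f=exp]) (simp add: complex_eq_iff field_simps)
  also have "\<dots> = 1" by (simp only: exp_2pi_1_int)
  finally show ?thesis .
qed

lemma norm_kernel_up:
  fixes N :: nat
  assumes "N > 0" "Im z > 0"
  shows "exp (- 2 * of_real pi * \<i> * of_nat N * z) \<noteq> 1"
    and "norm (1 / (exp (- 2 * of_real pi * \<i> * of_nat N * z) - 1)) \<le> 1 / (exp (2 * pi * N * Im z) - 1)"
proof -
  have n: "norm (exp (- 2 * of_real pi * \<i> * of_nat N * z)) = exp (2 * pi * N * Im z)"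
    by simp
  have gt: "exp (2 * pi * N * Im z) > 1" using assms by simp
  then show "exp (- 2 * of_real pi * \<i> * of_nat N * z) \<noteq> 1" using n by (metis less_irrefl norm_one)
  have "norm (exp (- 2 * of_real pi * \<i> * of_nat N * z) - 1) \<ge> exp (2 * pi * N * Im z) - 1"
    using norm_triangle_ineq2[of "exp (- 2 * of_real pi * \<i> * of_nat N * z)" 1] n by simp
  then show "norm (1 / (exp (- 2 * of_real pi * \<i> * of_nat N * z) - 1)) \<le> 1 / (exp (2 * pi * N * Im z) - 1)"
    using gt by (simp add: norm_divide divide_simps)
qed

lemma norm_kernel_half:
  fixes N :: nat and k :: int and t :: real
  assumes "N > 0" "t \<ge> 0"
  shows "exp (- 2 * of_real pi * \<i> * of_nat N * (complex_of_real ((real_of_int k - 1/2) / real N) + \<i> * of_real t)) \<noteq> 1"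
    and "norm (1 / (exp (- 2 * of_real pi * \<i> * of_nat N * (complex_of_real ((real_of_int k - 1/2) / real N) + \<i> * of_real t)) - 1)) \<le> 1"
proof -
  have "exp (- 2 * of_real pi * \<i> * of_nat N * (complex_of_real ((real_of_int k - 1/2) / real N) + \<i> * of_real t))
    = exp (- 2 * of_real pi * \<i> * of_nat N * complex_of_real ((real_of_int k - 1/2) / real N)) * exp (of_real (2 * pi * N * t))"
    by (simp add: exp_add[symmetric] algebra_simps)
  also have "\<dots> = (-1) * of_real (exp (2 * pi * N * t))"
    by (simp only: exp_half_lattice[OF assms(1)] exp_of_real)
  also have "\<dots> = - of_real (exp (2 * pi * N * t))" by simp
  finally have e: "exp (- 2 * of_real pi * \<i> * of_nat N * (complex_of_real ((real_of_int k - 1/2) / real N) + \<i> * of_real t)) = - of_real (exp (2 * pi * N * t))" .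
  define E where "E = exp (2 * pi * N * t)"
  have E: "E > 0" unfolding E_def by simp
  have "- complex_of_real E - 1 = - complex_of_real (E + 1)" by simp
  then have nn: "norm (- complex_of_real E - 1) = E + 1" using E by (simp only: norm_minus_cancel norm_of_real)
  show "norm (1 / (exp (- 2 * of_real pi * \<i> * of_nat N * (complex_of_real ((real_of_int k - 1/2) / real N) + \<i> * of_real t)) - 1)) \<le> 1"
    unfolding e E_def[symmetric] using nn E by (simp add: norm_divide)
  show "exp (- 2 * of_real pi * \<i> * of_nat N * (complex_of_real ((real_of_int k - 1/2) / real N) + \<i> * of_real t)) \<noteq> 1"
    unfolding e E_def[symmetric] using E by (auto simp: complex_eq_iff)
qed


lemma homotopic_paths_shift:
  fixes D :: "complex set"
  assumes hom: "homotopic_paths D p q" and D: "open D"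
  obtains d where "d > 0" "\<And>c. norm c < d \<Longrightarrow> homotopic_paths D (\<lambda>t. p t + c) (\<lambda>t. q t + c)"
proof -
  from hom obtain h where h: "continuous_on ({0..1} \<times> {0..1}) h" "h \<in> ({0..1} \<times> {0..1}) \<rightarrow> D"
     "\<forall>x \<in> {0..1}. h(0,x) = p x" "\<forall>x \<in> {0..1}. h(1,x) = q x"
     "\<forall>t \<in> {0..1::real}. pathstart(h \<circ> Pair t) = pathstart p \<and> pathfinish(h \<circ> Pair t) = pathfinish p"
    unfolding homotopic_paths by blast
  define K where "K = h ` ({0..1} \<times> {0..1})"
  have "compact K" unfolding K_def
    by (intro compact_continuous_image h compact_Times compact_Icc)
  moreover have "K \<subseteq> D" unfolding K_def using h(2) by blast
  ultimately obtain d where d: "d > 0" "(\<Union>x\<in>K. ball x d) \<subseteq> D"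
    using compact_subset_open_imp_ball_epsilon_subset D by blast
  have hK: "homotopic_paths K p q" unfolding homotopic_paths
    using h K_def by (intro exI[of _ h]) auto
  show ?thesis
  proof (rule that[OF d(1)])
    fix c :: complex assume c: "norm c < d"
    have "homotopic_paths ((\<lambda>z. z + c) ` K) ((\<lambda>z. z + c) \<circ> p) ((\<lambda>z. z + c) \<circ> q)"
      by (rule homotopic_paths_continuous_image[OF hK]) (auto intro!: continuous_intros)
    moreover have "(\<lambda>z. z + c) ` K \<subseteq> D"
    proof
      fix w assume "w \<in> (\<lambda>z. z + c) ` K"
      then obtain z where z: "z \<in> K" "w = z + c" by blast
      then have "w \<in> ball z d" using c by (simp add: dist_norm)
      then show "w \<in> D" using d z by blast
    qed
    ultimately show "homotopic_paths D (\<lambda>t. p t + c) (\<lambda>t. q t + c)"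
      by (auto intro: homotopic_paths_subset simp: o_def)
  qed
qed

lemma starlike_upper_punct:
  fixes x :: real
  shows "starlike ({z. Im z \<ge> 0} - {complex_of_real x})"
  unfolding starlike_def
proof (intro bexI[of _ "complex_of_real x + \<i>"] ballI)
  show "complex_of_real x + \<i> \<in> {z. Im z \<ge> 0} - {complex_of_real x}" by (auto simp: complex_eq_iff)
  fix y assume y: "y \<in> {z. Im z \<ge> 0} - {complex_of_real x}"
  show "closed_segment (complex_of_real x + \<i>) y \<subseteq> {z. Im z \<ge> 0} - {complex_of_real x}"
  proof
    fix w assume "w \<in> closed_segment (complex_of_real x + \<i>) y"
    then obtain u where u: "0 \<le> u" "u \<le> 1" "w = (1 - u) *\<^sub>R (complex_of_real x + \<i>) + u *\<^sub>R y"
      unfolding closed_segment_def by blast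
    have imw: "Im w = (1 - u) + u * Im y" using u by simp
    have "Im w \<ge> 0" using imw u y by auto
    moreover have "w \<noteq> complex_of_real x"
    proof
      assume wx: "w = complex_of_real x"
      then have "(1 - u) + u * Im y = 0" using imw by simp
      then have "u = 1" using u y by (smt (verit, best) mem_Collect_eq mult_nonneg_nonneg DiffE)
      then show False using u wx y by simp
    qed
    ultimately show "w \<in> {z. Im z \<ge> 0} - {complex_of_real x}" by simp
  qed
qed

lemma starlike_lower_punct:
  fixes x :: real
  shows "starlike ({z. Im z \<le> 0} - {complex_of_real x})"
  unfolding starlike_def
proof (intro bexI[of _ "complex_of_real x - \<i>"] ballI)
  show "complex_of_real x - \<i> \<in> {z. Im z \<le> 0} - {complex_of_real x}" by (auto simp: complex_eq_iff)
  fix y assume y: "y \<in> {z. Im z \<le> 0} - {complex_of_real x}"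
  show "closed_segment (complex_of_real x - \<i>) y \<subseteq> {z. Im z \<le> 0} - {complex_of_real x}"
  proof
    fix w assume "w \<in> closed_segment (complex_of_real x - \<i>) y"
    then obtain u where u: "0 \<le> u" "u \<le> 1" "w = (1 - u) *\<^sub>R (complex_of_real x - \<i>) + u *\<^sub>R y"
      unfolding closed_segment_def by blast
    have imw: "Im w = - (1 - u) + u * Im y" using u by simp
    have "u * Im y \<le> 0" using u y by (auto simp: mult_nonneg_nonpos)
    then have "Im w \<le> 0" using imw u by linarith
    moreover have "w \<noteq> complex_of_real x"
    proof
      assume wx: "w = complex_of_real x"
      then have "- (1 - u) + u * Im y = 0" using imw by simp
      then have "u = 1" using u y by (smt (verit, best) mem_Collect_eq mult_nonneg_nonpos DiffE)
      then show False using u wx y by simp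
    qed
    ultimately show "w \<in> {z. Im z \<le> 0} - {complex_of_real x}" by simp
  qed
qed

lemma homotopic_in_starlike:
  fixes S :: "complex set"
  assumes "starlike S" "path p" "path_image p \<subseteq> S" "path q" "path_image q \<subseteq> S"
    "pathstart q = pathstart p" "pathfinish q = pathfinish p"
  shows "homotopic_paths S p q"
  using starlike_imp_simply_connected[OF assms(1)] assms(2-)
  unfolding simply_connected_eq_homotopic_paths by blast

lemma winding_number_part_circlepath_centre:
  assumes "r > 0" "s < t"
  shows "winding_number (part_circlepath z r s t) z = (t - s) / (2 * pi)"
proof -
  have nz: "z \<notin> path_image (part_circlepath z r s t)"
    using assms by (auto simp: path_image_part_circlepath')
  have "((\<lambda>w. 1 / (w - z)) has_contour_integral (\<i> * (t - s))) (part_circlepath z r s t)"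
    unfolding has_contour_integral_part_circlepath_iff[OF assms(2)]
  proof -
    have "((\<lambda>x. \<i>) has_integral (\<i> * (t - s))) {s..t}"
      using has_integral_const_real[of "\<i>" s t] assms by (simp add: scaleR_conv_of_real algebra_simps)
    moreover have "(\<lambda>x. 1 / (z + complex_of_real r * cis x - z) * complex_of_real r * \<i> * cis x) = (\<lambda>x. \<i>)"
      using assms by (intro ext) (simp add: field_simps cis_neq_zero)
    ultimately show "((\<lambda>x. 1 / (z + complex_of_real r * cis x - z) * complex_of_real r * \<i> * cis x) has_integral \<i> * complex_of_real (t - s)) {s..t}"
      by simp
  qed
  then have "contour_integral (part_circlepath z r s t) (\<lambda>w. 1 / (w - z)) = \<i> * (t - s)"
    by (rule contour_integral_unique)
  then have "winding_number (part_circlepath z r s t) z = 1/(2*pi*\<i>) * (\<i> * (t - s))"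
    using winding_number_valid_path[OF valid_path_part_circlepath nz] by simp
  also have "\<dots> = (t - s) / (2 * pi)" by (simp add: field_simps)
  finally show ?thesis .
qed


lemma residue_simple_zero:
  fixes F E :: "complex \<Rightarrow> complex"
  assumes S: "open S" "p \<in> S" and F: "F holomorphic_on S"
    and hol: "(\<lambda>w. F w / (E w - 1)) holomorphic_on (S - {p})"
    and dE: "(E has_field_derivative E') (at p)" and Ep: "E p = 1" and E': "E' \<noteq> 0"
  shows "residue (\<lambda>w. F w / (E w - 1)) p = F p / E'"
proof (rule residue_simple'[OF S hol])
  have Fc: "isCont F p"
    using F S holomorphic_on_imp_continuous_on continuous_on_eq_continuous_at by blast
  have "((\<lambda>w. (E w - E p) / (w - p)) \<longlongrightarrow> E') (at p)"
    using dE by (simp add: has_field_derivative_iff)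
  then have "((\<lambda>w. inverse ((E w - E p) / (w - p))) \<longlongrightarrow> inverse E') (at p)"
    using E' by (intro tendsto_inverse) auto
  then have "((\<lambda>w. F w * inverse ((E w - 1) / (w - p))) \<longlongrightarrow> F p * inverse E') (at p)"
    using Fc Ep by (intro tendsto_mult) (auto simp: isCont_def)
  moreover have "(\<lambda>w. F w * inverse ((E w - 1) / (w - p))) = (\<lambda>w. F w / (E w - 1) * (w - p))"
    by (intro ext) (simp add: inverse_divide)
  ultimately show "((\<lambda>w. F w / (E w - 1) * (w - p)) \<longlongrightarrow> F p / E') (at p)"
    by (simp add: divide_inverse)
qed

definition hlo :: "real \<Rightarrow> nat \<Rightarrow> real" where
  "hlo A N = (real_of_int \<lceil>A * real N\<rceil> - 1/2) / real N"
definition hhi :: "real \<Rightarrow> nat \<Rightarrow> real" where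
  "hhi B N = (real_of_int (\<lfloor>B * real N\<rfloor> + 1) - 1/2) / real N"

lemma hlo_bounds: "N > 0 \<Longrightarrow> A - 1/(2*real N) \<le> hlo A N \<and> hlo A N < A + 1/(2*real N)"
proof -
  assume N: "N > 0"
  have "A * real N \<le> real_of_int \<lceil>A * real N\<rceil>" "real_of_int \<lceil>A * real N\<rceil> < A * real N + 1"
    by linarith+
  then have i: "-1/2 \<le> real_of_int \<lceil>A * real N\<rceil> - A * real N - 1/2" "real_of_int \<lceil>A * real N\<rceil> - A * real N - 1/2 < 1/2"
    by linarith+
  have e: "hlo A N - A = (real_of_int \<lceil>A * real N\<rceil> - A * real N - 1/2) / real N"
    using N by (simp add: hlo_def field_simps)
  have "(-1/2) / real N \<le> (real_of_int \<lceil>A * real N\<rceil> - A * real N - 1/2) / real N"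
    using i N by (intro divide_right_mono) auto
  moreover have "(real_of_int \<lceil>A * real N\<rceil> - A * real N - 1/2) / real N < (1/2) / real N"
    using i N by (intro divide_strict_right_mono) auto
  ultimately show ?thesis using e by auto
qed

lemma hhi_bounds: "N > 0 \<Longrightarrow> B - 1/(2*real N) < hhi B N \<and> hhi B N \<le> B + 1/(2*real N)"
proof -
  assume N: "N > 0"
  have "B * real N < real_of_int \<lfloor>B * real N\<rfloor> + 1" "real_of_int \<lfloor>B * real N\<rfloor> \<le> B * real N"
    by linarith+
  then have i: "-1/2 < real_of_int \<lfloor>B * real N\<rfloor> + 1/2 - B * real N" "real_of_int \<lfloor>B * real N\<rfloor> + 1/2 - B * real N \<le> 1/2"
    by linarith+
  have e: "hhi B N - B = (real_of_int \<lfloor>B * real N\<rfloor> + 1/2 - B * real N) / real N"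
    using N by (simp add: hhi_def field_simps)
  have "(-1/2) / real N < (real_of_int \<lfloor>B * real N\<rfloor> + 1/2 - B * real N) / real N"
    using i N by (intro divide_strict_right_mono) auto
  moreover have "(real_of_int \<lfloor>B * real N\<rfloor> + 1/2 - B * real N) / real N \<le> (1/2) / real N"
    using i N by (intro divide_right_mono) auto
  ultimately show ?thesis using e by auto
qed

lemma seg_vertical:
  assumes "z \<in> closed_segment p (p + \<i> * of_real h)" "h \<ge> 0"
  shows "\<exists>s. 0 \<le> s \<and> s \<le> h \<and> z = p + \<i> * of_real s"
proof -
  from assms(1) obtain u where u: "0 \<le> u" "u \<le> 1" "z = (1 - u) *\<^sub>R p + u *\<^sub>R (p + \<i> * of_real h)"
    unfolding closed_segment_def by blast
  then have "z = p + \<i> * of_real (u * h)" by (simp add: scaleR_conv_of_real algebra_simps)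
  moreover have "0 \<le> u * h" "u * h \<le> h" using u assms(2) by (auto simp: mult_left_le_one_le)
  ultimately show ?thesis by blast
qed

lemma seg_Im_const:
  assumes "z \<in> closed_segment u v" "Im u = Im v"
  shows "Im z = Im u"
proof -
  from assms(1) obtain t where t: "z = (1 - t) *\<^sub>R u + t *\<^sub>R v"
    unfolding closed_segment_def by blast
  then have "Im z = (1 - t) * Im u + t * Im v" by simp
  then show ?thesis using assms(2) by (simp add: algebra_simps)
qed

lemma seg_Re_const:
  assumes "z \<in> closed_segment u v" "Re u = Re v"
  shows "Re z = Re u"
proof -
  from assms(1) obtain t where t: "z = (1 - t) *\<^sub>R u + t *\<^sub>R v"
    unfolding closed_segment_def by blast
  then have "Re z = (1 - t) * Re u + t * Re v" by simp
  then show ?thesis using assms(2) by (simp add: algebra_simps)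
qed

lemma norm_exp_N:
  fixes N :: nat
  assumes "Re w \<le> r"
  shows "norm (exp (of_nat N * w)) \<le> exp (r * real N)"
proof -
  have "norm (exp (of_nat N * w)) = exp (real N * Re w)" by simp
  also have "\<dots> \<le> exp (r * real N)" using mult_right_mono[OF assms, of "real N"] by (simp add: mult.commute)
  finally show ?thesis .
qed

lemma norm5:
  fixes x1 x2 x3 x4 x5 :: complex
  shows "norm (x1 + (x2 + (x3 + (x4 + x5)))) \<le> norm x1 + (norm x2 + (norm x3 + (norm x4 + norm x5)))"
proof -
  have "norm (x1 + (x2 + (x3 + (x4 + x5)))) \<le> norm x1 + norm (x2 + (x3 + (x4 + x5)))" by (rule norm_triangle_ineq)
  also have "norm (x2 + (x3 + (x4 + x5))) \<le> norm x2 + norm (x3 + (x4 + x5))" by (rule norm_triangle_ineq)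
  also have "norm (x3 + (x4 + x5)) \<le> norm x3 + norm (x4 + x5)" by (rule norm_triangle_ineq)
  also have "norm (x4 + x5) \<le> norm x4 + norm x5" by (rule norm_triangle_ineq)
  finally show ?thesis by simp
qed

lemma side_N:
  fixes A B \<eta> \<rho> \<rho>' c L0 :: real and D SM Bx :: "complex set" and \<psi>N :: "complex \<Rightarrow> complex"
    and M :: "real \<Rightarrow> complex" and N :: nat
  assumes N: "N > 0" and AB: "A < B" and D: "open D" and hN: "\<psi>N holomorphic_on D"
    and Bx: "convex Bx" "open Bx" "Bx \<subseteq> D"
    and boxpts: "\<And>x. A - \<rho>' < x \<Longrightarrow> x < B + \<rho>' \<Longrightarrow> complex_of_real x \<in> Bx \<and> complex_of_real x + \<i> * complex_of_real \<eta> \<in> Bx"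
    and ballA: "ball (complex_of_real A) \<rho> \<subseteq> D" "\<And>z. z \<in> ball (complex_of_real A) \<rho> \<Longrightarrow> Re (\<psi>N z) \<le> -c"
    and ballB: "ball (complex_of_real B) \<rho> \<subseteq> D" "\<And>z. z \<in> ball (complex_of_real B) \<rho> \<Longrightarrow> Re (\<psi>N z) \<le> -c"
    and \<eta>: "0 < \<eta>" "\<eta> < \<rho>/2"
    and Nbig: "1 / real N < \<rho>" "1 / real N < \<rho>'" "exp (pi * real N * \<eta>) \<ge> 2"
    and M: "valid_path M" "pathstart M = complex_of_real A + \<i> * complex_of_real \<eta>"
       "pathfinish M = complex_of_real B + \<i> * complex_of_real \<eta>" "path_image M \<subseteq> SM" "open SM" "SM \<subseteq> D"
       "\<And>z. z \<in> SM \<Longrightarrow> Im z > \<eta>/2 \<and> Re (\<psi>N z) \<le> 2 * pi * Im z - c"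
    and Mint: "\<And>h. h holomorphic_on D \<Longrightarrow> contour_integral M h =
        contour_integral (linepath (complex_of_real A + \<i> * complex_of_real \<eta>) (complex_of_real B + \<i> * complex_of_real \<eta>)) h"
    and L0: "\<And>g Bd. g holomorphic_on SM \<Longrightarrow> (\<And>z. z \<in> SM \<Longrightarrow> norm (g z) \<le> Bd) \<Longrightarrow> norm (contour_integral M g) \<le> L0 * Bd"
    and c: "c > 0"
  defines "a0 \<equiv> complex_of_real (hlo A N)" and "b0 \<equiv> complex_of_real (hhi B N)"
  shows "\<exists>\<gamma>. valid_path \<gamma> \<and> pathstart \<gamma> = a0 \<and> pathfinish \<gamma> = b0 \<and> path_image \<gamma> \<subseteq> D
      \<and> (\<forall>z\<in>path_image \<gamma>. 0 < Im z \<or> z = a0 \<or> z = b0)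
      \<and> (\<forall>h. h holomorphic_on D \<longrightarrow> contour_integral \<gamma> h = contour_integral (linepath a0 b0) h)
      \<and> norm (contour_integral \<gamma> (\<lambda>z. exp (of_nat N * \<psi>N z) / (exp (- 2 * of_real pi * \<i> * of_nat N * z) - 1)))
           \<le> (2 * \<eta> + 4 + 2 * L0) * exp (- c * real N)
      \<and> (\<forall>z \<in> closed_segment a0 (complex_of_real A) \<union> closed_segment (complex_of_real B) b0.
           norm (exp (of_nat N * \<psi>N z)) \<le> exp (- c * real N))
      \<and> (\<forall>h. h holomorphic_on D \<longrightarrow> contour_integral (linepath a0 b0) h =
           contour_integral (linepath a0 (complex_of_real A)) h + contour_integral (linepath (complex_of_real A) (complex_of_real B)) h
           + contour_integral (linepath (complex_of_real B) b0) h)"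
proof -
  define n where "n = real N"
  have n: "n > 0" using N by (simp add: n_def)
  define G where "G = (\<lambda>z. exp (of_nat N * \<psi>N z) / (exp (- 2 * of_real pi * \<i> * of_nat N * z) - 1))"
  define e where "e = exp (- c * real N)"
  define a1 where "a1 = a0 + \<i> * complex_of_real \<eta>"
  define a2 where "a2 = complex_of_real A + \<i> * complex_of_real \<eta>"
  define b2 where "b2 = complex_of_real B + \<i> * complex_of_real \<eta>"
  define b1 where "b1 = b0 + \<i> * complex_of_real \<eta>"
  define \<gamma> where "\<gamma> = linepath a0 a1 +++ (linepath a1 a2 +++ (M +++ (linepath b2 b1 +++ linepath b1 b0)))"
  have hA: "\<bar>hlo A N - A\<bar> < \<rho>/2" "\<bar>hlo A N - A\<bar> < \<rho>'/2"
    using hlo_bounds[OF N, of A] Nbig(1,2) by (auto simp: abs_if field_simps)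
  have hB: "\<bar>hhi B N - B\<bar> < \<rho>/2" "\<bar>hhi B N - B\<bar> < \<rho>'/2"
    using hhi_bounds[OF N, of B] Nbig(1,2) by (auto simp: abs_if field_simps)
  have hA1: "\<bar>hlo A N - A\<bar> \<le> 1" and hB1: "\<bar>hhi B N - B\<bar> \<le> 1"
  proof -
    have "1/(2*real N) \<le> 1" using N by (simp add: field_simps)
    then show "\<bar>hlo A N - A\<bar> \<le> 1" "\<bar>hhi B N - B\<bar> \<le> 1"
      using hlo_bounds[OF N, of A] hhi_bounds[OF N, of B] by (auto simp: abs_if)
  qed
  have nrm: "norm (complex_of_real x + \<i> * complex_of_real y) \<le> \<bar>x\<bar> + \<bar>y\<bar>" for x y
    using cmod_le[of "complex_of_real x + \<i> * complex_of_real y"] by simp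
  have inA: "a0 \<in> ball (complex_of_real A) \<rho>" "a1 \<in> ball (complex_of_real A) \<rho>"
     "a2 \<in> ball (complex_of_real A) \<rho>" "complex_of_real A \<in> ball (complex_of_real A) \<rho>"
  proof -
    have "dist (complex_of_real A) a1 = norm (complex_of_real (hlo A N - A) + \<i> * complex_of_real \<eta>)"
      by (simp add: a1_def a0_def dist_norm norm_minus_commute[of "complex_of_real _"] algebra_simps)
    also have "\<dots> \<le> \<bar>hlo A N - A\<bar> + \<bar>\<eta>\<bar>" by (rule nrm)
    finally show "a1 \<in> ball (complex_of_real A) \<rho>" using hA \<eta> by simp
    show "a0 \<in> ball (complex_of_real A) \<rho>" using hA \<eta> abs_minus_commute[of A "hlo A N"]
      by (simp add: a0_def dist_norm flip: of_real_diff)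
    show "a2 \<in> ball (complex_of_real A) \<rho>" using \<eta> by (simp add: a2_def dist_norm norm_mult)
    show "complex_of_real A \<in> ball (complex_of_real A) \<rho>" using \<eta> by simp
  qed
  have inB: "b0 \<in> ball (complex_of_real B) \<rho>" "b1 \<in> ball (complex_of_real B) \<rho>"
     "b2 \<in> ball (complex_of_real B) \<rho>" "complex_of_real B \<in> ball (complex_of_real B) \<rho>"
  proof -
    have "dist (complex_of_real B) b1 = norm (complex_of_real (hhi B N - B) + \<i> * complex_of_real \<eta>)"
      by (simp add: b1_def b0_def dist_norm norm_minus_commute[of "complex_of_real _"] algebra_simps)
    also have "\<dots> \<le> \<bar>hhi B N - B\<bar> + \<bar>\<eta>\<bar>" by (rule nrm)
    finally show "b1 \<in> ball (complex_of_real B) \<rho>" using hB \<eta> by simp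
    show "b0 \<in> ball (complex_of_real B) \<rho>" using hB \<eta> abs_minus_commute[of B "hhi B N"]
      by (simp add: b0_def dist_norm flip: of_real_diff)
    show "b2 \<in> ball (complex_of_real B) \<rho>" using \<eta> by (simp add: b2_def dist_norm norm_mult)
    show "complex_of_real B \<in> ball (complex_of_real B) \<rho>" using \<eta> by simp
  qed
  have segA: "closed_segment p q \<subseteq> ball (complex_of_real A) \<rho>" if "p \<in> ball (complex_of_real A) \<rho>" "q \<in> ball (complex_of_real A) \<rho>" for p q
    using that by (intro closed_segment_subset convex_ball)
  have segB: "closed_segment p q \<subseteq> ball (complex_of_real B) \<rho>" if "p \<in> ball (complex_of_real B) \<rho>" "q \<in> ball (complex_of_real B) \<rho>" for p q
    using that by (intro closed_segment_subset convex_ball)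
  have fA: "norm (exp (of_nat N * \<psi>N z)) \<le> e" if "z \<in> ball (complex_of_real A) \<rho>" for z
    unfolding e_def using norm_exp_N[OF ballA(2)[OF that], of N] by simp
  have fB: "norm (exp (of_nat N * \<psi>N z)) \<le> e" if "z \<in> ball (complex_of_real B) \<rho>" for z
    unfolding e_def using norm_exp_N[OF ballB(2)[OF that], of N] by simp
  have vA: "\<exists>s. 0 \<le> s \<and> s \<le> \<eta> \<and> z = a0 + \<i> * complex_of_real s" if "z \<in> closed_segment a0 a1" for z
    using seg_vertical[of z a0 \<eta>] that \<eta> by (simp add: a1_def)
  have vB: "\<exists>s. 0 \<le> s \<and> s \<le> \<eta> \<and> z = b0 + \<i> * complex_of_real s" if "z \<in> closed_segment b1 b0" for z
    using seg_vertical[of z b0 \<eta>] that \<eta> by (simp add: b1_def closed_segment_commute)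
  have hA12: "Im z = \<eta>" if "z \<in> closed_segment a1 a2" for z
    using seg_Im_const[OF that] by (simp add: a1_def a2_def a0_def)
  have hB21: "Im z = \<eta>" if "z \<in> closed_segment b2 b1" for z
    using seg_Im_const[OF that] by (simp add: b1_def b2_def b0_def)
  have ImM: "Im z > 0" if "z \<in> path_image M" for z
  proof -
    have "z \<in> SM" using M(4) that by blast
    from M(7)[OF this] \<eta> show ?thesis by linarith
  qed
  have ends: "pathfinish (linepath a0 a1) = pathstart (linepath a1 a2 +++ (M +++ (linepath b2 b1 +++ linepath b1 b0)))"
     "pathfinish (linepath a1 a2) = pathstart (M +++ (linepath b2 b1 +++ linepath b1 b0))"
     "pathfinish M = pathstart (linepath b2 b1 +++ linepath b1 b0)"
     "pathfinish (linepath b2 b1) = pathstart (linepath b1 b0)"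
    using M(2,3) by (simp_all add: a2_def b2_def)
  have valid: "valid_path \<gamma>" unfolding \<gamma>_def using ends M(1)
    by (intro valid_path_join valid_path_linepath) auto
  have pim: "path_image \<gamma> = closed_segment a0 a1 \<union> (closed_segment a1 a2 \<union> (path_image M \<union> (closed_segment b2 b1 \<union> closed_segment b1 b0)))"
    unfolding \<gamma>_def using ends by (simp add: path_image_join)
  have pimD: "path_image \<gamma> \<subseteq> D"
    unfolding pim using segA[OF inA(1,2)] segA[OF inA(2,3)] segB[OF inB(3,2)] segB[OF inB(2,1)] ballA(1) ballB(1) M(4,6)
    by blast
  have pimIm: "\<forall>z\<in>path_image \<gamma>. 0 < Im z \<or> z = a0 \<or> z = b0"
  proof
    fix z assume "z \<in> path_image \<gamma>"
    then consider "z \<in> closed_segment a0 a1" | "z \<in> closed_segment a1 a2" | "z \<in> path_image M"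
      | "z \<in> closed_segment b2 b1" | "z \<in> closed_segment b1 b0" unfolding pim by blast
    then show "0 < Im z \<or> z = a0 \<or> z = b0"
    proof cases
      case 1 then obtain s where "0 \<le> s" "z = a0 + \<i> * complex_of_real s" using vA by blast
      then show ?thesis by (cases "s = 0") (auto simp: a0_def)
    next
      case 2 then show ?thesis using hA12 \<eta> by auto
    next
      case 3 then show ?thesis using ImM by auto
    next
      case 4 then show ?thesis using hB21 \<eta> by auto
    next
      case 5 then obtain s where "0 \<le> s" "z = b0 + \<i> * complex_of_real s" using vB by blast
      then show ?thesis by (cases "s = 0") (auto simp: b0_def)
    qed
  qed
  have \<rho>'pos: "\<rho>' > 0" using Nbig(2) N by (smt (verit) divide_pos_pos of_nat_0_less_iff)
  have inBx: "a0 \<in> Bx" "a1 \<in> Bx" "a2 \<in> Bx" "complex_of_real A \<in> Bx"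
      "b0 \<in> Bx" "b1 \<in> Bx" "b2 \<in> Bx" "complex_of_real B \<in> Bx"
  proof -
    have x1: "A - \<rho>' < hlo A N" "hlo A N < B + \<rho>'" using hA(2) AB by (auto simp: abs_if split: if_splits)
    have x2: "A - \<rho>' < hhi B N" "hhi B N < B + \<rho>'" using hB(2) AB by (auto simp: abs_if split: if_splits)
    have x3: "A - \<rho>' < A" "A < B + \<rho>'" "A - \<rho>' < B" "B < B + \<rho>'" using AB \<rho>'pos by auto
    show "a0 \<in> Bx" "a1 \<in> Bx" using boxpts[OF x1] by (auto simp: a0_def a1_def)
    show "b0 \<in> Bx" "b1 \<in> Bx" using boxpts[OF x2] by (auto simp: b0_def b1_def)
    show "a2 \<in> Bx" "complex_of_real A \<in> Bx" using boxpts[OF x3(1,2)] by (auto simp: a2_def)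
    show "b2 \<in> Bx" "complex_of_real B \<in> Bx" using boxpts[OF x3(3,4)] by (auto simp: b2_def)
  qed
  have split5: "contour_integral \<gamma> h = contour_integral (linepath a0 a1) h + (contour_integral (linepath a1 a2) h +
       (contour_integral M h + (contour_integral (linepath b2 b1) h + contour_integral (linepath b1 b0) h)))"
    if i1: "h contour_integrable_on linepath a0 a1" "h contour_integrable_on linepath a1 a2"
       "h contour_integrable_on M" "h contour_integrable_on linepath b2 b1" "h contour_integrable_on linepath b1 b0" for h
    proof -
      have v4: "valid_path (linepath b2 b1 +++ linepath b1 b0)" using ends by (intro valid_path_join) auto
      have v3: "valid_path (M +++ (linepath b2 b1 +++ linepath b1 b0))" using ends v4 M(1) by (intro valid_path_join) auto
      have v2: "valid_path (linepath a1 a2 +++ (M +++ (linepath b2 b1 +++ linepath b1 b0)))" using ends v3 by (intro valid_path_join) auto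
      have j4: "h contour_integrable_on (linepath b2 b1 +++ linepath b1 b0)" using i1 by (intro contour_integrable_joinI) auto
      have j3: "h contour_integrable_on (M +++ (linepath b2 b1 +++ linepath b1 b0))" using i1 j4 v4 M(1) by (intro contour_integrable_joinI) auto
      have j2: "h contour_integrable_on (linepath a1 a2 +++ (M +++ (linepath b2 b1 +++ linepath b1 b0)))" using i1 j3 v3 M(1) by (intro contour_integrable_joinI) auto
      show ?thesis unfolding \<gamma>_def
        using contour_integral_join[OF i1(1) j2 valid_path_linepath v2] contour_integral_join[OF i1(2) j3 valid_path_linepath v3]
          contour_integral_join[OF i1(3) j4 M(1) v4] contour_integral_join[OF i1(4) i1(5) valid_path_linepath valid_path_linepath]
        by simp
    qed
  have cauchy: "contour_integral \<gamma> h = contour_integral (linepath a0 b0) h \<and>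
      contour_integral (linepath a0 b0) h =
           contour_integral (linepath a0 (complex_of_real A)) h + contour_integral (linepath (complex_of_real A) (complex_of_real B)) h
           + contour_integral (linepath (complex_of_real B) b0) h" if h: "h holomorphic_on D" for h
  proof -
    obtain F where F: "\<And>x. x \<in> Bx \<Longrightarrow> (F has_field_derivative h x) (at x within Bx)"
      using holomorphic_convex_primitive'[OF Bx(1) Bx(2) holomorphic_on_subset[OF h Bx(3)]] by blast
    have lin: "contour_integral (linepath p q) h = F q - F p" if "p \<in> Bx" "q \<in> Bx" for p q
    proof -
      have "(h has_contour_integral (F (pathfinish (linepath p q)) - F (pathstart (linepath p q)))) (linepath p q)"
        using closed_segment_subset[OF that Bx(1)]
        by (intro contour_integral_primitive[OF F]) auto
      then show ?thesis by (simp add: contour_integral_unique)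
    qed
    have int: "h contour_integrable_on g" if "valid_path g" "path_image g \<subseteq> D" for g
      using contour_integrable_holomorphic_simple[OF h D that] .
    have i1: "h contour_integrable_on linepath a0 a1" "h contour_integrable_on linepath a1 a2"
       "h contour_integrable_on M" "h contour_integrable_on linepath b2 b1" "h contour_integrable_on linepath b1 b0"
      using int[OF valid_path_linepath] segA[OF inA(1,2)] segA[OF inA(2,3)] segB[OF inB(3,2)] segB[OF inB(2,1)]
        ballA(1) ballB(1) int[OF M(1)] M(4,6) by auto
    have "contour_integral \<gamma> h = contour_integral (linepath a0 a1) h + (contour_integral (linepath a1 a2) h +
       (contour_integral M h + (contour_integral (linepath b2 b1) h + contour_integral (linepath b1 b0) h)))"
      using split5[OF i1] .
    also have "\<dots> = F b0 - F a0"
      using Mint[OF h] lin inBx by (simp add: a2_def b2_def)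
    finally show ?thesis using lin inBx by simp
  qed
  define E where "E = (\<lambda>z. exp (- 2 * of_real pi * \<i> * of_nat N * z))"
  define Os where "Os = D \<inter> {z. E z \<noteq> 1}"
  have Oopen: "open Os" unfolding Os_def E_def
    by (intro open_Int D open_Collect_neq) (auto intro!: continuous_intros)
  have hO: "\<psi>N holomorphic_on Os" using hN by (rule holomorphic_on_subset) (auto simp: Os_def)
  have Ghol: "G holomorphic_on Os" unfolding G_def
    by (intro holomorphic_intros hO) (auto simp: Os_def E_def)
  have Gmult: "G z = exp (of_nat N * \<psi>N z) * (1 / (E z - 1))" for z
    by (simp add: G_def E_def)
  have kv: "E z \<noteq> 1 \<and> norm (1 / (E z - 1)) \<le> 1" if zin: "z \<in> closed_segment a0 a1 \<union> closed_segment b1 b0" for z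
  proof -
    consider "z \<in> closed_segment a0 a1" | "z \<in> closed_segment b1 b0" using zin by blast
    then show ?thesis
    proof cases
      case 1
      then obtain s where s: "0 \<le> s" "z = a0 + \<i> * complex_of_real s" using vA by blast
      show ?thesis using norm_kernel_half[OF N s(1), of "\<lceil>A * real N\<rceil>"] unfolding s(2) E_def a0_def hlo_def by simp
    next
      case 2
      then obtain s where s: "0 \<le> s" "z = b0 + \<i> * complex_of_real s" using vB by blast
      show ?thesis using norm_kernel_half[OF N s(1), of "\<lfloor>B * real N\<rfloor> + 1"] unfolding s(2) E_def b0_def hhi_def by simp
    qed
  qed
  have Gup: "norm (G z) \<le> 2 * e" if "Im z > \<eta>/2" "Re (\<psi>N z) \<le> 2 * pi * Im z - c" for z
  proof -
    define X where "X = exp (2 * pi * real N * Im z)"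
    have "pi * real N * \<eta> \<le> 2 * pi * real N * Im z" using that(1) N by (simp add: field_simps)
    then have X2: "X \<ge> 2" unfolding X_def using Nbig(3) by (smt (verit) exp_mono)
    have k: "norm (1 / (E z - 1)) \<le> 1 / (X - 1)"
      using norm_kernel_up(2)[OF N, of z] that(1) \<eta> unfolding E_def X_def by simp
    also have "\<dots> \<le> 2 / X" using X2 by (simp add: field_simps)
    finally have k2: "norm (1 / (E z - 1)) \<le> 2 / X" .
    have "norm (exp (of_nat N * \<psi>N z)) \<le> exp ((2 * pi * Im z - c) * real N)"
      by (rule norm_exp_N[OF that(2)])
    also have "\<dots> = X * e" unfolding X_def e_def by (simp add: exp_add[symmetric] algebra_simps)
    finally have f2: "norm (exp (of_nat N * \<psi>N z)) \<le> X * e" .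
    have "norm (G z) \<le> (X * e) * (2 / X)"
      unfolding Gmult norm_mult using X2 by (intro mult_mono f2 k2) (auto simp: e_def)
    also have "\<dots> = 2 * e" using X2 by simp
    finally show ?thesis .
  qed
  have e0: "e \<ge> 0" by (simp add: e_def)
  have Ge: "norm (G z) \<le> e" if "z \<in> closed_segment a0 a1 \<union> closed_segment b1 b0" for z
  proof -
    have "z \<in> ball (complex_of_real A) \<rho> \<union> ball (complex_of_real B) \<rho>"
      using that segA[OF inA(1,2)] segB[OF inB(2,1)] by blast
    then have "norm (exp (of_nat N * \<psi>N z)) \<le> e" using fA fB by blast
    then have "norm (G z) \<le> e * 1" unfolding Gmult norm_mult using kv[OF that] e0 by (intro mult_mono) auto
    then show ?thesis by simp
  qed
  have Gh: "norm (G z) \<le> 2 * e" if "z \<in> closed_segment a1 a2 \<union> closed_segment b2 b1" for z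
  proof -
    have im: "Im z = \<eta>" using that hA12 hB21 by blast
    have "z \<in> ball (complex_of_real A) \<rho> \<union> ball (complex_of_real B) \<rho>"
      using that segA[OF inA(2,3)] segB[OF inB(3,2)] by blast
    then have "Re (\<psi>N z) \<le> -c" using ballA(2) ballB(2) by blast
    moreover have "0 \<le> 2 * pi * \<eta>" using \<eta> by simp
    ultimately have "Re (\<psi>N z) \<le> 2 * pi * Im z - c" unfolding im by linarith
    then show ?thesis using Gup[of z] im \<eta> by simp
  qed
  have subO: "closed_segment a0 a1 \<subseteq> Os" "closed_segment a1 a2 \<subseteq> Os" "path_image M \<subseteq> Os"
     "closed_segment b2 b1 \<subseteq> Os" "closed_segment b1 b0 \<subseteq> Os"
  proof -
    have upO: "z \<in> Os" if "z \<in> D" "Im z > 0" for z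
      using norm_kernel_up(1)[OF N that(2)] that(1) by (simp add: Os_def E_def)
    show "closed_segment a0 a1 \<subseteq> Os" "closed_segment b1 b0 \<subseteq> Os"
      using kv segA[OF inA(1,2)] segB[OF inB(2,1)] ballA(1) ballB(1) by (auto simp: Os_def)
    show "closed_segment a1 a2 \<subseteq> Os" "closed_segment b2 b1 \<subseteq> Os"
    proof -
      show "closed_segment a1 a2 \<subseteq> Os"
      proof
        fix z assume z: "z \<in> closed_segment a1 a2"
        then have "z \<in> D" using segA[OF inA(2,3)] ballA(1) by blast
        moreover have "Im z > 0" using hA12[OF z] \<eta> by simp
        ultimately show "z \<in> Os" by (rule upO)
      qed
      show "closed_segment b2 b1 \<subseteq> Os"
      proof
        fix z assume z: "z \<in> closed_segment b2 b1"
        then have "z \<in> D" using segB[OF inB(3,2)] ballB(1) by blast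
        moreover have "Im z > 0" using hB21[OF z] \<eta> by simp
        ultimately show "z \<in> Os" by (rule upO)
      qed
    qed
    show "path_image M \<subseteq> Os" using upO ImM M(4,6) by blast
  qed
  have Gi: "G contour_integrable_on linepath a0 a1" "G contour_integrable_on linepath a1 a2"
       "G contour_integrable_on M" "G contour_integrable_on linepath b2 b1" "G contour_integrable_on linepath b1 b0"
    using contour_integrable_holomorphic_simple[OF Ghol Oopen] subO M(1) by auto
  have b1': "norm (contour_integral (linepath a0 a1) G) \<le> e * \<eta>"
    using contour_integral_bound_linepath[OF Gi(1) e0, of ] Ge \<eta> by (simp add: a1_def norm_mult)
  have b5': "norm (contour_integral (linepath b1 b0) G) \<le> e * \<eta>"
    using contour_integral_bound_linepath[OF Gi(5) e0, of ] Ge \<eta> by (simp add: b1_def norm_mult)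
  have b2': "norm (contour_integral (linepath a1 a2) G) \<le> 2 * e * 1"
  proof -
    have "norm (contour_integral (linepath a1 a2) G) \<le> 2 * e * norm (a2 - a1)"
      using contour_integral_bound_linepath[OF Gi(2), of "2 * e"] Gh e0 by simp
    moreover have "norm (a2 - a1) \<le> 1" using hA1 abs_minus_commute[of A "hlo A N"]
      by (simp add: a2_def a1_def a0_def flip: of_real_diff)
    moreover have "2 * e * norm (a2 - a1) \<le> 2 * e * 1" using e0 \<open>norm (a2 - a1) \<le> 1\<close> by (intro mult_left_mono) auto
    ultimately show ?thesis by linarith
  qed
  have b4': "norm (contour_integral (linepath b2 b1) G) \<le> 2 * e * 1"
  proof -
    have "norm (contour_integral (linepath b2 b1) G) \<le> 2 * e * norm (b1 - b2)"
      using contour_integral_bound_linepath[OF Gi(4), of "2 * e"] Gh e0 by simp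
    moreover have "norm (b1 - b2) \<le> 1" using hB1
      by (simp add: b2_def b1_def b0_def flip: of_real_diff)
    moreover have "2 * e * norm (b1 - b2) \<le> 2 * e * 1" using e0 \<open>norm (b1 - b2) \<le> 1\<close> by (intro mult_left_mono) auto
    ultimately show ?thesis by linarith
  qed
  have b3': "norm (contour_integral M G) \<le> L0 * (2 * e)"
  proof (rule L0)
    have "SM \<subseteq> Os"
    proof
      fix z assume z: "z \<in> SM"
      then have "Im z > 0" using M(7)[OF z] \<eta> by linarith
      then show "z \<in> Os" using norm_kernel_up(1)[OF N, of z] z M(6) by (auto simp: Os_def E_def)
    qed
    then show "G holomorphic_on SM" using Ghol by (rule holomorphic_on_subset[rotated])
    show "norm (G z) \<le> 2 * e" if "z \<in> SM" for z using Gup M(7)[OF that] by blast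
  qed
  have bound: "norm (contour_integral \<gamma> G) \<le> (2 * \<eta> + 4 + 2 * L0) * e"
  proof -
    have "norm (contour_integral \<gamma> G) \<le> norm (contour_integral (linepath a0 a1) G) + (norm (contour_integral (linepath a1 a2) G) +
       (norm (contour_integral M G) + (norm (contour_integral (linepath b2 b1) G) + norm (contour_integral (linepath b1 b0) G))))"
      unfolding split5[OF Gi] by (rule norm5)
    also have "\<dots> \<le> (2 * \<eta> + 4 + 2 * L0) * e" using b1' b2' b3' b4' b5' by (simp add: algebra_simps)
    finally show ?thesis .
  qed
  show ?thesis
  proof (intro exI[of _ \<gamma>] conjI)
    show "valid_path \<gamma>" by (rule valid)
    show "pathstart \<gamma> = a0" "pathfinish \<gamma> = b0" unfolding \<gamma>_def by simp_all
    show "path_image \<gamma> \<subseteq> D" by (rule pimD)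
    show "\<forall>z\<in>path_image \<gamma>. 0 < Im z \<or> z = a0 \<or> z = b0" by (rule pimIm)
    show "\<forall>h. h holomorphic_on D \<longrightarrow> contour_integral \<gamma> h = contour_integral (linepath a0 b0) h"
      using cauchy by blast
    show "\<forall>h. h holomorphic_on D \<longrightarrow> contour_integral (linepath a0 b0) h =
           contour_integral (linepath a0 (complex_of_real A)) h + contour_integral (linepath (complex_of_real A) (complex_of_real B)) h
           + contour_integral (linepath (complex_of_real B) b0) h"
      using cauchy by blast
    show "norm (contour_integral \<gamma> (\<lambda>z. exp (of_nat N * \<psi>N z) / (exp (- 2 * of_real pi * \<i> * of_nat N * z) - 1)))
           \<le> (2 * \<eta> + 4 + 2 * L0) * exp (- c * real N)"
      using bound unfolding G_def e_def .
    show "\<forall>z \<in> closed_segment a0 (complex_of_real A) \<union> closed_segment (complex_of_real B) b0.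
           norm (exp (of_nat N * \<psi>N z)) \<le> exp (- c * real N)"
      using segA[OF inA(1,4)] segB[OF inB(4,1)] fA fB unfolding e_def by blast
  qed
qed

lemma side_upper:
  fixes A B :: real and D :: "complex set" and \<psi>s :: "nat \<Rightarrow> complex \<Rightarrow> complex" and \<psi> :: "complex \<Rightarrow> complex"
    and C :: "real \<Rightarrow> complex"
  assumes AB: "A < B" and D: "open D" and seg: "complex_of_real ` {A..B} \<subseteq> D"
    and hols: "\<And>N. N \<ge> 1 \<Longrightarrow> \<psi>s N holomorphic_on D"
    and unif: "uniform_limit D \<psi>s \<psi> sequentially"
    and hol: "\<psi> holomorphic_on D"
    and RA: "Re (\<psi> (complex_of_real A)) < 0" and RB: "Re (\<psi> (complex_of_real B)) < 0"
    and C: "path C" "pathstart C = complex_of_real A" "pathfinish C = complex_of_real B"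
       "path_image C \<subseteq> region_plus D \<psi>" "homotopic_paths D C (linepath (complex_of_real A) (complex_of_real B))"
  shows "\<exists>c>0. \<exists>L. \<exists>N0>0. \<forall>N\<ge>N0. \<exists>\<gamma>. valid_path \<gamma> \<and> pathstart \<gamma> = complex_of_real (hlo A N)
      \<and> pathfinish \<gamma> = complex_of_real (hhi B N) \<and> path_image \<gamma> \<subseteq> D
      \<and> (\<forall>z\<in>path_image \<gamma>. 0 < Im z \<or> z = complex_of_real (hlo A N) \<or> z = complex_of_real (hhi B N))
      \<and> (\<forall>h. h holomorphic_on D \<longrightarrow> contour_integral \<gamma> h = contour_integral (linepath (complex_of_real (hlo A N)) (complex_of_real (hhi B N))) h)
      \<and> norm (contour_integral \<gamma> (\<lambda>z. exp (of_nat N * \<psi>s N z) / (exp (- 2 * of_real pi * \<i> * of_nat N * z) - 1)))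
           \<le> L * exp (- c * real N)
      \<and> (\<forall>z \<in> closed_segment (complex_of_real (hlo A N)) (complex_of_real A) \<union> closed_segment (complex_of_real B) (complex_of_real (hhi B N)).
           norm (exp (of_nat N * \<psi>s N z)) \<le> exp (- c * real N))
      \<and> (\<forall>h. h holomorphic_on D \<longrightarrow> contour_integral (linepath (complex_of_real (hlo A N)) (complex_of_real (hhi B N))) h =
           contour_integral (linepath (complex_of_real (hlo A N)) (complex_of_real A)) h + contour_integral (linepath (complex_of_real A) (complex_of_real B)) h
           + contour_integral (linepath (complex_of_real B) (complex_of_real (hhi B N))) h)"
proof -
  define K where "K = path_image C"
  have Kc: "compact K" "K \<noteq> {}" using C(1) unfolding K_def by auto
  have KD: "K \<subseteq> region_plus D \<psi>" using C(4) K_def by simp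
  define \<phi> where "\<phi> = (\<lambda>z. 2 * pi * Im z - Re (\<psi> z))"
  have \<psi>c: "continuous_on D \<psi>" using hol by (rule holomorphic_on_imp_continuous_on)
  have "continuous_on D \<phi>" unfolding \<phi>_def using \<psi>c by (auto intro!: continuous_intros)
  then have "continuous_on K \<phi>" by (rule continuous_on_subset) (use KD in \<open>auto simp: region_plus_def\<close>)
  then obtain x0 where x0: "x0 \<in> K" "\<And>y. y \<in> K \<Longrightarrow> \<phi> x0 \<le> \<phi> y"
    using continuous_attains_inf[OF Kc] by blast
  define m where "m = \<phi> x0"
  have m: "m > 0" using x0(1) KD unfolding m_def \<phi>_def region_plus_def by auto
  define V where "V = {z \<in> D. Re (\<psi> z) < 2 * pi * Im z - m/2}"
  have c1: "continuous_on D (\<lambda>z. Re (\<psi> z))" using \<psi>c by (intro continuous_intros)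
  have c2: "continuous_on D (\<lambda>z. 2 * pi * Im z - m/2)" by (intro continuous_intros)
  obtain U where U: "open U" "U \<inter> D = V"
    using open_Collect_less_Int[OF c1 c2] unfolding V_def by blast
  have Vo: "open V" using U D by auto
  have KV: "K \<subseteq> V"
  proof
    fix y assume y: "y \<in> K"
    then have "\<phi> y \<ge> m" using x0 m_def by auto
    then show "y \<in> V" using y KD m unfolding V_def \<phi>_def region_plus_def by auto
  qed
  obtain r where r: "r > 0" "(\<Union>x\<in>K. ball x r) \<subseteq> V"
    using compact_subset_open_imp_ball_epsilon_subset[OF Kc(1) Vo KV] by blast
  define \<mu> where "\<mu> = min (- Re (\<psi> (complex_of_real A))) (- Re (\<psi> (complex_of_real B))) / 2"
  have \<mu>: "\<mu> > 0" using RA RB by (simp add: \<mu>_def)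
  define W where "W = {z \<in> D. Re (\<psi> z) < - \<mu>}"
  have c3: "continuous_on D (\<lambda>z. - \<mu>)" by (intro continuous_intros)
  obtain U2 where U2: "open U2" "U2 \<inter> D = W"
    using open_Collect_less_Int[OF c1 c3] unfolding W_def by blast
  have Wo: "open W" using U2 D by auto
  have AD: "complex_of_real A \<in> D" "complex_of_real B \<in> D" using seg AB by auto
  have AW: "complex_of_real A \<in> W" "complex_of_real B \<in> W"
    using AD RA RB \<mu> unfolding W_def \<mu>_def by auto
  obtain \<rho>A where \<rho>A: "\<rho>A > 0" "ball (complex_of_real A) \<rho>A \<subseteq> W" using Wo AW(1) open_contains_ball by blast
  obtain \<rho>B where \<rho>B: "\<rho>B > 0" "ball (complex_of_real B) \<rho>B \<subseteq> W" using Wo AW(2) open_contains_ball by blast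
  define \<rho> where "\<rho> = min \<rho>A \<rho>B"
  have \<rho>: "\<rho> > 0" "ball (complex_of_real A) \<rho> \<subseteq> W" "ball (complex_of_real B) \<rho> \<subseteq> W"
    using \<rho>A \<rho>B unfolding \<rho>_def by auto
  have "compact (complex_of_real ` {A..B})" by (intro compact_continuous_image continuous_intros) auto
  then obtain r0 where r0: "r0 > 0" "(\<Union>x\<in>complex_of_real ` {A..B}. ball x r0) \<subseteq> D"
    using compact_subset_open_imp_ball_epsilon_subset[OF _ D seg] by blast
  define \<rho>' where "\<rho>' = r0 / 2"
  have \<rho>': "\<rho>' > 0" using r0 by (simp add: \<rho>'_def)
  define Bx where "Bx = {z. Re z > A - \<rho>'} \<inter> {z. Re z < B + \<rho>'} \<inter> {z. Im z > - \<rho>'} \<inter> {z. Im z < \<rho>'}"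
  have Bxc: "convex Bx" unfolding Bx_def
    by (intro convex_Int convex_halfspace_Re_gt convex_halfspace_Re_lt convex_halfspace_Im_gt convex_halfspace_Im_lt)
  have Bxo: "open Bx" unfolding Bx_def
    by (intro open_Int open_halfspace_Re_gt open_halfspace_Re_lt open_halfspace_Im_gt open_halfspace_Im_lt)
  have BxD: "Bx \<subseteq> D"
  proof
    fix z assume z: "z \<in> Bx"
    define x where "x = max A (min B (Re z))"
    have x: "x \<in> {A..B}" using AB by (auto simp: x_def)
    have "\<bar>Re z - x\<bar> < \<rho>'" using z AB \<rho>' by (auto simp: x_def Bx_def)
    moreover have "\<bar>Im z\<bar> < \<rho>'" using z by (auto simp: Bx_def)
    moreover have "norm (z - complex_of_real x) \<le> \<bar>Re z - x\<bar> + \<bar>Im z\<bar>"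
      using cmod_le[of "z - complex_of_real x"] by simp
    ultimately have "z \<in> ball (complex_of_real x) r0"
      by (simp add: dist_norm norm_minus_commute \<rho>'_def)
    then show "z \<in> D" using r0(2) x by blast
  qed
  obtain d where d: "d > 0" "\<And>c. norm c < d \<Longrightarrow> homotopic_paths D (\<lambda>t. C t + c) (\<lambda>t. linepath (complex_of_real A) (complex_of_real B) t + c)"
    using homotopic_paths_shift[OF C(5) D] by blast
  define c where "c = min (m/4) (\<mu>/2)"
  have c: "c > 0" "c \<le> m/4" "c \<le> \<mu>/2" using m \<mu> by (auto simp: c_def)
  obtain N1 where N1: "\<And>N z. N \<ge> N1 \<Longrightarrow> z \<in> D \<Longrightarrow> dist (\<psi>s N z) (\<psi> z) < c"
    using uniform_limitD[OF unif c(1)] unfolding eventually_sequentially by blast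
  have Rec: "Re (\<psi>s N z) < Re (\<psi> z) + c" if "N \<ge> N1" "z \<in> D" for N z
  proof -
    have "Re (\<psi>s N z) - Re (\<psi> z) \<le> norm (\<psi>s N z - \<psi> z)"
      using abs_Re_le_cmod[of "\<psi>s N z - \<psi> z"] by simp
    then show ?thesis using N1[OF that] by (simp add: dist_norm)
  qed
  define \<eta> where "\<eta> = min (min r \<rho>) (min d \<rho>') / 4"
  have \<eta>: "\<eta> > 0" "\<eta> \<le> r/4" "\<eta> < \<rho>/2" "\<eta> < d" "\<eta> < \<rho>'"
    using r \<rho> d \<rho>' by (auto simp: \<eta>_def)
  obtain P where P: "polynomial_function P" "pathstart P = pathstart C" "pathfinish P = pathfinish C"
      "\<And>t. t \<in> {0..1} \<Longrightarrow> norm (P t - C t) < \<eta>/2"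
    using path_approx_polynomial_function[OF C(1), of "\<eta>/2"] \<eta> by auto
  define M where "M = (\<lambda>t. P t + \<i> * complex_of_real \<eta>)"
  have Mp: "polynomial_function M" unfolding M_def using P(1) by auto
  have Mv: "valid_path M" by (rule valid_path_polynomial_function[OF Mp])
  have Mse: "pathstart M = complex_of_real A + \<i> * complex_of_real \<eta>" "pathfinish M = complex_of_real B + \<i> * complex_of_real \<eta>"
    using P(2,3) C(2,3) by (auto simp: M_def pathstart_def pathfinish_def)
  define SM where "SM = V \<inter> {z. Im z > \<eta>/2}"
  have SMo: "open SM" unfolding SM_def using Vo by (intro open_Int open_halfspace_Im_gt)
  have SMD: "SM \<subseteq> D" unfolding SM_def V_def by auto
  have Mball: "M t \<in> ball (C t) r" "C t + \<i> * complex_of_real \<eta> \<in> ball (C t) r" "C t \<in> K" if "t \<in> {0..1}" for t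
  proof -
    have "norm (M t - C t) \<le> norm (P t - C t) + norm (\<i> * complex_of_real \<eta>)"
      unfolding M_def by (metis add_diff_eq diff_add_eq norm_triangle_ineq add.commute diff_add_eq_diff_diff_swap)
    then show "M t \<in> ball (C t) r" using P(4)[OF that] \<eta> r by (simp add: dist_norm norm_minus_commute norm_mult)
    show "C t + \<i> * complex_of_real \<eta> \<in> ball (C t) r" using \<eta> r by (simp add: dist_norm norm_mult)
    show "C t \<in> K" using that unfolding K_def path_image_def by blast
  qed
  have MSM: "path_image M \<subseteq> SM"
  proof
    fix z assume "z \<in> path_image M"
    then obtain t where t: "t \<in> {0..1}" "z = M t" unfolding path_image_def by blast
    have "z \<in> V" using Mball[OF t(1)] r(2) t(2) by blast
    moreover have "Im (C t) \<ge> 0" using Mball(3)[OF t(1)] KD by (auto simp: region_plus_def)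
    moreover have "Im (C t) - Im (P t) \<le> norm (P t - C t)"
      using abs_Im_le_cmod[of "P t - C t"] by simp
    ultimately show "z \<in> SM" using P(4)[OF t(1)] t(2) unfolding SM_def M_def by auto
  qed
  have SMprop: "Im z > \<eta>/2 \<and> Re (\<psi>s N z) \<le> 2 * pi * Im z - c" if "z \<in> SM" "N \<ge> N1" for z N
    using Rec[OF that(2), of z] that(1) c unfolding SM_def V_def by auto
  have Mint: "contour_integral M h = contour_integral (linepath (complex_of_real A + \<i> * complex_of_real \<eta>) (complex_of_real B + \<i> * complex_of_real \<eta>)) h"
    if h: "h holomorphic_on D" for h
  proof -
    have "homotopic_paths D M (\<lambda>t. C t + \<i> * complex_of_real \<eta>)"
    proof (rule homotopic_paths_linear)
      show "path M" using Mv by (rule valid_path_imp_path)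
      show "path (\<lambda>t. C t + \<i> * complex_of_real \<eta>)" using C(1) unfolding path_def by (auto intro!: continuous_intros)
      show "pathstart (\<lambda>t. C t + \<i> * complex_of_real \<eta>) = pathstart M" "pathfinish (\<lambda>t. C t + \<i> * complex_of_real \<eta>) = pathfinish M"
        using Mse C(2,3) by (auto simp: pathstart_def pathfinish_def)
      show "closed_segment (M t) (C t + \<i> * complex_of_real \<eta>) \<subseteq> D" if "t \<in> {0..1}" for t
      proof -
        have "closed_segment (M t) (C t + \<i> * complex_of_real \<eta>) \<subseteq> ball (C t) r"
          using Mball[OF that] by (intro closed_segment_subset convex_ball) auto
        also have "\<dots> \<subseteq> V" using r(2) Mball(3)[OF that] by blast
        finally show ?thesis unfolding V_def by blast
      qed
    qed
    also have "homotopic_paths D (\<lambda>t. C t + \<i> * complex_of_real \<eta>) (\<lambda>t. linepath (complex_of_real A) (complex_of_real B) t + \<i> * complex_of_real \<eta>)"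
      using d(2)[of "\<i> * complex_of_real \<eta>"] \<eta> by (simp add: norm_mult)
    also have "(\<lambda>t. linepath (complex_of_real A) (complex_of_real B) t + \<i> * complex_of_real \<eta>)
       = linepath (complex_of_real A + \<i> * complex_of_real \<eta>) (complex_of_real B + \<i> * complex_of_real \<eta>)"
      by (rule ext) (simp add: linepath_def scaleR_conv_of_real algebra_simps)
    finally have hp: "homotopic_paths D M (linepath (complex_of_real A + \<i> * complex_of_real \<eta>) (complex_of_real B + \<i> * complex_of_real \<eta>))" .
    show ?thesis using Cauchy_theorem_homotopic_paths[OF hp D h Mv valid_path_linepath] .
  qed
  obtain L0 where L0: "L0 > 0" "\<And>g Bd. g holomorphic_on SM \<Longrightarrow> (\<And>z. z \<in> SM \<Longrightarrow> norm (g z) \<le> Bd) \<Longrightarrow> norm (contour_integral M g) \<le> L0 * Bd"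
    using contour_integral_bound_exists[OF SMo Mv MSM] by blast
  define N0 where "N0 = max (max N1 1) (nat \<lceil>1/\<rho> + 1/\<rho>' + 1/(pi * \<eta>)\<rceil> + 1)"
  show ?thesis
  proof (rule exI[of _ c], intro conjI exI[of _ "2 * \<eta> + 4 + 2 * L0"] exI[of _ N0] allI impI)
    show "c > 0" by (rule c(1))
    show "N0 > 0" by (simp add: N0_def)
    fix N assume N: "N0 \<le> N"
    have N1': "N \<ge> N1" "N \<ge> 1" using N by (auto simp: N0_def)
    have Npos: "N > 0" using N1' by simp
    have Nge: "real N \<ge> 1/\<rho> + 1/\<rho>' + 1/(pi * \<eta>) + 1"
    proof -
      have "real (nat \<lceil>1/\<rho> + 1/\<rho>' + 1/(pi * \<eta>)\<rceil> + 1) \<ge> 1/\<rho> + 1/\<rho>' + 1/(pi * \<eta>) + 1"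
        by linarith
      moreover have "nat \<lceil>1/\<rho> + 1/\<rho>' + 1/(pi * \<eta>)\<rceil> + 1 \<le> N" using N by (simp add: N0_def)
      ultimately show ?thesis by (smt (verit) of_nat_mono)
    qed
    have pos: "1/\<rho> > 0" "1/\<rho>' > 0" "1/(pi * \<eta>) > 0" using \<rho> \<rho>' \<eta> by auto
    have Nbig: "1 / real N < \<rho>" "1 / real N < \<rho>'" "exp (pi * real N * \<eta>) \<ge> 2"
    proof -
      have "real N > 1/\<rho>" using Nge pos by linarith
      then show "1 / real N < \<rho>" using \<rho> Npos by (simp add: field_simps)
      have "real N > 1/\<rho>'" using Nge pos by linarith
      then show "1 / real N < \<rho>'" using \<rho>' Npos by (simp add: field_simps)
      have "real N \<ge> 1/(pi * \<eta>)" using Nge pos by linarith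
      then have "pi * real N * \<eta> \<ge> 1" using \<eta> by (simp add: field_simps)
      then show "exp (pi * real N * \<eta>) \<ge> 2" using exp_ge_add_one_self[of "pi * real N * \<eta>"] by linarith
    qed
    have ballRe: "Re (\<psi>s N z) \<le> -c" if "z \<in> W" for z
      using Rec[OF N1'(1), of z] that c unfolding W_def by auto
    show "\<exists>\<gamma>. valid_path \<gamma> \<and> pathstart \<gamma> = complex_of_real (hlo A N)
      \<and> pathfinish \<gamma> = complex_of_real (hhi B N) \<and> path_image \<gamma> \<subseteq> D
      \<and> (\<forall>z\<in>path_image \<gamma>. 0 < Im z \<or> z = complex_of_real (hlo A N) \<or> z = complex_of_real (hhi B N))
      \<and> (\<forall>h. h holomorphic_on D \<longrightarrow> contour_integral \<gamma> h = contour_integral (linepath (complex_of_real (hlo A N)) (complex_of_real (hhi B N))) h)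
      \<and> norm (contour_integral \<gamma> (\<lambda>z. exp (of_nat N * \<psi>s N z) / (exp (- 2 * of_real pi * \<i> * of_nat N * z) - 1)))
           \<le> (2 * \<eta> + 4 + 2 * L0) * exp (- c * real N)
      \<and> (\<forall>z \<in> closed_segment (complex_of_real (hlo A N)) (complex_of_real A) \<union> closed_segment (complex_of_real B) (complex_of_real (hhi B N)).
           norm (exp (of_nat N * \<psi>s N z)) \<le> exp (- c * real N))
      \<and> (\<forall>h. h holomorphic_on D \<longrightarrow> contour_integral (linepath (complex_of_real (hlo A N)) (complex_of_real (hhi B N))) h =
           contour_integral (linepath (complex_of_real (hlo A N)) (complex_of_real A)) h + contour_integral (linepath (complex_of_real A) (complex_of_real B)) h
           + contour_integral (linepath (complex_of_real B) (complex_of_real (hhi B N))) h)"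
    proof (rule side_N[OF Npos AB D hols[OF N1'(2)] Bxc Bxo BxD _ _ _ _ _ \<eta>(1,3) Nbig Mv Mse MSM SMo SMD _ Mint L0(2) c(1)])
      show "complex_of_real x \<in> Bx \<and> complex_of_real x + \<i> * complex_of_real \<eta> \<in> Bx"
        if "A - \<rho>' < x" "x < B + \<rho>'" for x using that \<eta> \<rho>' by (auto simp: Bx_def)
      show "ball (complex_of_real A) \<rho> \<subseteq> D" "ball (complex_of_real B) \<rho> \<subseteq> D" using \<rho> W_def by auto
      show "Re (\<psi>s N z) \<le> - c" if "z \<in> ball (complex_of_real A) \<rho>" for z using that \<rho> ballRe by blast
      show "Re (\<psi>s N z) \<le> - c" if "z \<in> ball (complex_of_real B) \<rho>" for z using that \<rho> ballRe by blast
      show "\<eta> / 2 < Im z \<and> Re (\<psi>s N z) \<le> 2 * pi * Im z - c" if "z \<in> SM" for z using SMprop[OF that N1'(1)] .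
    qed
  qed
qed

lemma hlo_neg: "N > 0 \<Longrightarrow> hlo (- B) N = - hhi B N"
  unfolding hlo_def hhi_def by (simp add: ceiling_minus field_simps)

lemma hhi_neg: "N > 0 \<Longrightarrow> hhi (- A) N = - hlo A N"
  unfolding hlo_def hhi_def by (simp add: floor_minus field_simps)

lemma ci_neg_rev:
  assumes "valid_path g"
  shows "contour_integral (uminus \<circ> reversepath g) h = contour_integral g (\<lambda>x. h (- x))"
proof -
  have "contour_integral (uminus \<circ> reversepath g) h = - contour_integral (reversepath g) (\<lambda>x. h (- x))"
    by (rule contour_integral_negatepath) (use assms in simp)
  also have "\<dots> = contour_integral g (\<lambda>x. h (- x))"
    using contour_integral_reversepath[OF assms] by simp
  finally show ?thesis .
qed

lemma neg_rev_linepath: "uminus \<circ> reversepath (linepath p q) = linepath (- q) (- p)"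
  by (rule ext) (simp add: reversepath_def linepath_def algebra_simps)

lemma side_lower:
  fixes A B :: real and D :: "complex set" and \<psi>s :: "nat \<Rightarrow> complex \<Rightarrow> complex" and \<psi> :: "complex \<Rightarrow> complex"
    and C :: "real \<Rightarrow> complex"
  assumes AB: "A < B" and D: "open D" and seg: "complex_of_real ` {A..B} \<subseteq> D"
    and hols: "\<And>N. N \<ge> 1 \<Longrightarrow> \<psi>s N holomorphic_on D"
    and unif: "uniform_limit D \<psi>s \<psi> sequentially"
    and hol: "\<psi> holomorphic_on D"
    and RA: "Re (\<psi> (complex_of_real A)) < 0" and RB: "Re (\<psi> (complex_of_real B)) < 0"
    and C: "path C" "pathstart C = complex_of_real A" "pathfinish C = complex_of_real B"
       "path_image C \<subseteq> region_minus D \<psi>" "homotopic_paths D C (linepath (complex_of_real A) (complex_of_real B))"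
  shows "\<exists>c>0. \<exists>L. \<exists>N0>0. \<forall>N\<ge>N0. \<exists>\<gamma>. valid_path \<gamma> \<and> pathstart \<gamma> = complex_of_real (hlo A N)
      \<and> pathfinish \<gamma> = complex_of_real (hhi B N) \<and> path_image \<gamma> \<subseteq> D
      \<and> (\<forall>z\<in>path_image \<gamma>. Im z < 0 \<or> z = complex_of_real (hlo A N) \<or> z = complex_of_real (hhi B N))
      \<and> (\<forall>h. h holomorphic_on D \<longrightarrow> contour_integral \<gamma> h = contour_integral (linepath (complex_of_real (hlo A N)) (complex_of_real (hhi B N))) h)
      \<and> norm (contour_integral \<gamma> (\<lambda>z. exp (of_nat N * \<psi>s N z) / (exp (2 * of_real pi * \<i> * of_nat N * z) - 1)))
           \<le> L * exp (- c * real N)"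
proof -
  define D' where "D' = (\<lambda>x. - x) ` D"
  define C' where "C' = uminus \<circ> reversepath C"
  have D'o: "open D'" unfolding D'_def using D by (rule open_negations)
  have memD': "z \<in> D' \<longleftrightarrow> - z \<in> D" for z
    unfolding D'_def by (metis (no_types, lifting) image_iff minus_minus)
  have seg': "complex_of_real ` {- B..- A} \<subseteq> D'"
  proof
    fix z assume "z \<in> complex_of_real ` {- B..- A}"
    then obtain x where x: "x \<in> {-B..-A}" "z = complex_of_real x" by blast
    then have "complex_of_real (-x) \<in> D" using seg by auto
    then show "z \<in> D'" using x memD' by simp
  qed
  have hols': "(\<lambda>z. \<psi>s N (- z)) holomorphic_on D'" if "N \<ge> 1" for N
  proof -
    have "(\<psi>s N \<circ> uminus) holomorphic_on D'"
    proof (rule holomorphic_on_compose)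
      show "uminus holomorphic_on D'" by (intro holomorphic_intros)
      have "uminus ` D' = D" unfolding D'_def by (auto simp: image_image)
      then show "\<psi>s N holomorphic_on uminus ` D'" using hols[OF that] by simp
    qed
    then show ?thesis by (simp add: o_def)
  qed
  have hol': "(\<lambda>z. \<psi> (- z)) holomorphic_on D'"
  proof -
    have "(\<psi> \<circ> uminus) holomorphic_on D'"
    proof (rule holomorphic_on_compose)
      show "uminus holomorphic_on D'" by (intro holomorphic_intros)
      have "uminus ` D' = D" unfolding D'_def by (auto simp: image_image)
      then show "\<psi> holomorphic_on uminus ` D'" using hol by simp
    qed
    then show ?thesis by (simp add: o_def)
  qed
  have unif': "uniform_limit D' (\<lambda>N z. \<psi>s N (- z)) (\<lambda>z. \<psi> (- z)) sequentially"
    unfolding uniform_limit_iff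
  proof (intro allI impI)
    fix e :: real assume e: "e > 0"
    from uniform_limitD[OF unif e] show "\<forall>\<^sub>F n in sequentially. \<forall>x\<in>D'. dist (\<psi>s n (- x)) (\<psi> (- x)) < e"
      by eventually_elim (auto simp: memD')
  qed
  have C': "path C'" "pathstart C' = complex_of_real (- B)" "pathfinish C' = complex_of_real (- A)"
    using C(1-3) unfolding C'_def path_def
    by (auto intro!: continuous_intros simp: pathstart_def pathfinish_def reversepath_def o_def
        intro: continuous_on_compose2[of "{0..1}" C])
  have pim': "path_image C' = uminus ` path_image C"
    unfolding C'_def by (simp add: path_image_compose)
  have reg': "path_image C' \<subseteq> region_plus D' (\<lambda>z. \<psi> (- z))"
  proof
    fix z assume "z \<in> path_image C'"
    then obtain w where w: "w \<in> path_image C" "z = - w" using pim' by blast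
    then have "w \<in> region_minus D \<psi>" using C(4) by blast
    then show "z \<in> region_plus D' (\<lambda>z. \<psi> (- z))"
      using w(2) memD' by (auto simp: region_minus_def region_plus_def)
  qed
  have hom': "homotopic_paths D' C' (linepath (complex_of_real (- B)) (complex_of_real (- A)))"
  proof -
    have "homotopic_paths D (reversepath C) (reversepath (linepath (complex_of_real A) (complex_of_real B)))"
      by (rule homotopic_paths_reversepath_D[OF C(5)])
    then have "homotopic_paths D' (uminus \<circ> reversepath C) (uminus \<circ> reversepath (linepath (complex_of_real A) (complex_of_real B)))"
      by (rule homotopic_paths_continuous_image) (auto intro!: continuous_intros simp: memD')
    then show ?thesis unfolding C'_def neg_rev_linepath by simp
  qed
  have AB': "- B < - A" using AB by simp
  have RB': "Re (\<psi> (- complex_of_real (- B))) < 0" and RA': "Re (\<psi> (- complex_of_real (- A))) < 0"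
    using RA RB by simp_all
  have SU: "\<exists>c>0. \<exists>L. \<exists>N0>0. \<forall>N\<ge>N0. \<exists>\<gamma>. valid_path \<gamma> \<and> pathstart \<gamma> = complex_of_real (hlo (- B) N)
      \<and> pathfinish \<gamma> = complex_of_real (hhi (- A) N) \<and> path_image \<gamma> \<subseteq> D'
      \<and> (\<forall>z\<in>path_image \<gamma>. 0 < Im z \<or> z = complex_of_real (hlo (- B) N) \<or> z = complex_of_real (hhi (- A) N))
      \<and> (\<forall>h. h holomorphic_on D' \<longrightarrow> contour_integral \<gamma> h = contour_integral (linepath (complex_of_real (hlo (- B) N)) (complex_of_real (hhi (- A) N))) h)
      \<and> norm (contour_integral \<gamma> (\<lambda>z. exp (of_nat N * \<psi>s N (- z)) / (exp (- 2 * of_real pi * \<i> * of_nat N * z) - 1)))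
           \<le> L * exp (- c * real N)
      \<and> (\<forall>z \<in> closed_segment (complex_of_real (hlo (- B) N)) (complex_of_real (- B)) \<union> closed_segment (complex_of_real (- A)) (complex_of_real (hhi (- A) N)).
           norm (exp (of_nat N * \<psi>s N (- z))) \<le> exp (- c * real N))
      \<and> (\<forall>h. h holomorphic_on D' \<longrightarrow> contour_integral (linepath (complex_of_real (hlo (- B) N)) (complex_of_real (hhi (- A) N))) h =
           contour_integral (linepath (complex_of_real (hlo (- B) N)) (complex_of_real (- B))) h + contour_integral (linepath (complex_of_real (- B)) (complex_of_real (- A))) h
           + contour_integral (linepath (complex_of_real (- A)) (complex_of_real (hhi (- A) N))) h)"
    by (rule side_upper[of "- B" "- A" D' "\<lambda>N z. \<psi>s N (- z)" "\<lambda>z. \<psi> (- z)" C', OF AB' D'o seg' hols' unif' hol' RB' RA' C' reg' hom'])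
  then obtain c L N0 where cLN: "c > 0" "N0 > 0" and main: "\<forall>N\<ge>N0. \<exists>\<gamma>. valid_path \<gamma> \<and> pathstart \<gamma> = complex_of_real (hlo (- B) N)
      \<and> pathfinish \<gamma> = complex_of_real (hhi (- A) N) \<and> path_image \<gamma> \<subseteq> D'
      \<and> (\<forall>z\<in>path_image \<gamma>. 0 < Im z \<or> z = complex_of_real (hlo (- B) N) \<or> z = complex_of_real (hhi (- A) N))
      \<and> (\<forall>h. h holomorphic_on D' \<longrightarrow> contour_integral \<gamma> h = contour_integral (linepath (complex_of_real (hlo (- B) N)) (complex_of_real (hhi (- A) N))) h)
      \<and> norm (contour_integral \<gamma> (\<lambda>z. exp (of_nat N * \<psi>s N (- z)) / (exp (- 2 * of_real pi * \<i> * of_nat N * z) - 1)))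
           \<le> L * exp (- c * real N)
      \<and> (\<forall>z \<in> closed_segment (complex_of_real (hlo (- B) N)) (complex_of_real (- B)) \<union> closed_segment (complex_of_real (- A)) (complex_of_real (hhi (- A) N)).
           norm (exp (of_nat N * \<psi>s N (- z))) \<le> exp (- c * real N))
      \<and> (\<forall>h. h holomorphic_on D' \<longrightarrow> contour_integral (linepath (complex_of_real (hlo (- B) N)) (complex_of_real (hhi (- A) N))) h =
           contour_integral (linepath (complex_of_real (hlo (- B) N)) (complex_of_real (- B))) h + contour_integral (linepath (complex_of_real (- B)) (complex_of_real (- A))) h
           + contour_integral (linepath (complex_of_real (- A)) (complex_of_real (hhi (- A) N))) h)"
    by blast
  show ?thesis
  proof (rule exI[of _ c], intro conjI exI[of _ L] exI[of _ N0] allI impI)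
    show "c > 0" "N0 > 0" using cLN by auto
    fix N assume N: "N0 \<le> N"
    have Npos: "N > 0" using N cLN by simp
    obtain \<gamma> where g: "valid_path \<gamma>" "pathstart \<gamma> = complex_of_real (hlo (- B) N)"
      "pathfinish \<gamma> = complex_of_real (hhi (- A) N)" "path_image \<gamma> \<subseteq> D'"
      "\<forall>z\<in>path_image \<gamma>. 0 < Im z \<or> z = complex_of_real (hlo (- B) N) \<or> z = complex_of_real (hhi (- A) N)"
      "\<forall>h. h holomorphic_on D' \<longrightarrow> contour_integral \<gamma> h = contour_integral (linepath (complex_of_real (hlo (- B) N)) (complex_of_real (hhi (- A) N))) h"
      "norm (contour_integral \<gamma> (\<lambda>z. exp (of_nat N * \<psi>s N (- z)) / (exp (- 2 * of_real pi * \<i> * of_nat N * z) - 1)))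
           \<le> L * exp (- c * real N)"
      using main N by blast
    note hn = hlo_neg[OF Npos, of B] hhi_neg[OF Npos, of A]
    define \<delta> where "\<delta> = uminus \<circ> reversepath \<gamma>"
    have pimd: "path_image \<delta> = uminus ` path_image \<gamma>" unfolding \<delta>_def by (simp add: path_image_compose)
    show "\<exists>\<gamma>. valid_path \<gamma> \<and> pathstart \<gamma> = complex_of_real (hlo A N)
      \<and> pathfinish \<gamma> = complex_of_real (hhi B N) \<and> path_image \<gamma> \<subseteq> D
      \<and> (\<forall>z\<in>path_image \<gamma>. Im z < 0 \<or> z = complex_of_real (hlo A N) \<or> z = complex_of_real (hhi B N))
      \<and> (\<forall>h. h holomorphic_on D \<longrightarrow> contour_integral \<gamma> h = contour_integral (linepath (complex_of_real (hlo A N)) (complex_of_real (hhi B N))) h)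
      \<and> norm (contour_integral \<gamma> (\<lambda>z. exp (of_nat N * \<psi>s N z) / (exp (2 * of_real pi * \<i> * of_nat N * z) - 1)))
           \<le> L * exp (- c * real N)"
    proof (intro exI[of _ \<delta>] conjI)
      show "valid_path \<delta>" unfolding \<delta>_def using g(1) by (intro valid_path_negatepath) simp
      show "pathstart \<delta> = complex_of_real (hlo A N)" "pathfinish \<delta> = complex_of_real (hhi B N)"
        using g(2,3) hn by (simp_all add: \<delta>_def pathstart_def pathfinish_def reversepath_def)
      show "path_image \<delta> \<subseteq> D" using g(4) pimd memD' by auto
      show "\<forall>z\<in>path_image \<delta>. Im z < 0 \<or> z = complex_of_real (hlo A N) \<or> z = complex_of_real (hhi B N)"
      proof
        fix z assume "z \<in> path_image \<delta>"
        then obtain w where w: "w \<in> path_image \<gamma>" "z = - w" using pimd by blast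
        then show "Im z < 0 \<or> z = complex_of_real (hlo A N) \<or> z = complex_of_real (hhi B N)"
          using g(5) hn by auto
      qed
      show "\<forall>h. h holomorphic_on D \<longrightarrow> contour_integral \<delta> h = contour_integral (linepath (complex_of_real (hlo A N)) (complex_of_real (hhi B N))) h"
      proof (intro allI impI)
        fix h assume h: "h holomorphic_on D"
        have h': "(\<lambda>x. h (- x)) holomorphic_on D'"
        proof -
          have "(h \<circ> uminus) holomorphic_on D'"
          proof (rule holomorphic_on_compose)
            show "uminus holomorphic_on D'" by (intro holomorphic_intros)
            have "uminus ` D' = D" unfolding D'_def by (auto simp: image_image)
            then show "h holomorphic_on uminus ` D'" using h by simp
          qed
          then show ?thesis by (simp add: o_def)
        qed
        have "contour_integral \<delta> h = contour_integral \<gamma> (\<lambda>x. h (- x))"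
          unfolding \<delta>_def by (rule ci_neg_rev[OF g(1)])
        also have "\<dots> = contour_integral (linepath (complex_of_real (hlo (- B) N)) (complex_of_real (hhi (- A) N))) (\<lambda>x. h (- x))"
          using g(6) h' by blast
        also have "\<dots> = contour_integral (uminus \<circ> reversepath (linepath (complex_of_real (hlo (- B) N)) (complex_of_real (hhi (- A) N)))) h"
          by (rule ci_neg_rev[symmetric]) simp
        also have "\<dots> = contour_integral (linepath (complex_of_real (hlo A N)) (complex_of_real (hhi B N))) h"
          unfolding neg_rev_linepath hn by simp
        finally show "contour_integral \<delta> h = contour_integral (linepath (complex_of_real (hlo A N)) (complex_of_real (hhi B N))) h" .
      qed
      have "contour_integral \<delta> (\<lambda>z. exp (of_nat N * \<psi>s N z) / (exp (2 * of_real pi * \<i> * of_nat N * z) - 1))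
          = contour_integral \<gamma> (\<lambda>x. exp (of_nat N * \<psi>s N (- x)) / (exp (2 * of_real pi * \<i> * of_nat N * (- x)) - 1))"
        unfolding \<delta>_def by (rule ci_neg_rev[OF g(1)])
      also have "\<dots> = contour_integral \<gamma> (\<lambda>z. exp (of_nat N * \<psi>s N (- z)) / (exp (- 2 * of_real pi * \<i> * of_nat N * z) - 1))"
        by (simp add: algebra_simps)
      finally show "norm (contour_integral \<delta> (\<lambda>z. exp (of_nat N * \<psi>s N z) / (exp (2 * of_real pi * \<i> * of_nat N * z) - 1)))
           \<le> L * exp (- c * real N)" using g(7) by simp
    qed
  qed
qed

lemma lattice_ne_half:
  assumes "N > 0"
  shows "complex_of_real (real_of_int k / real N) \<noteq> complex_of_real ((real_of_int j - 1/2) / real N)"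
proof
  assume "complex_of_real (real_of_int k / real N) = complex_of_real ((real_of_int j - 1/2) / real N)"
  then have "real_of_int k / real N = (real_of_int j - 1/2) / real N" by (simp only: of_real_eq_iff)
  then have "real_of_int k = real_of_int j - 1/2" using assms by (simp add: divide_cancel_right)
  then have "real_of_int (2 * k) = real_of_int (2 * j - 1)" by simp
  then have "2 * k = 2 * j - 1" by linarith
  then show False by presburger
qed

lemma lattice_ne_hlo: "N > 0 \<Longrightarrow> complex_of_real (real_of_int k / real N) \<noteq> complex_of_real (hlo A N)"
  unfolding hlo_def by (rule lattice_ne_half)

lemma lattice_ne_hhi: "N > 0 \<Longrightarrow> complex_of_real (real_of_int k / real N) \<noteq> complex_of_real (hhi B N)"
  unfolding hhi_def by (rule lattice_ne_half)

lemma lattice_out: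
  assumes N: "N > 0" and k: "\<not> (a \<le> real_of_int k / real N \<and> real_of_int k / real N \<le> b)"
  shows "real_of_int k / real N < hlo a N \<or> real_of_int k / real N > hhi b N"
proof -
  have n: "real N > 0" using N by simp
  consider "real_of_int k / real N < a" | "real_of_int k / real N > b" using k by linarith
  then show ?thesis
  proof cases
    case 1
    then have "real_of_int k < a * real N" using n by (simp add: field_simps)
    then have "k < \<lceil>a * real N\<rceil>" by (simp add: less_ceiling_iff)
    then have "real_of_int k < real_of_int \<lceil>a * real N\<rceil> - 1/2" by linarith
    then have "real_of_int k / real N < (real_of_int \<lceil>a * real N\<rceil> - 1/2) / real N"
      using n by (simp add: divide_strict_right_mono)
    then show ?thesis unfolding hlo_def by simp
  next
    case 2
    then have "real_of_int k > b * real N" using n by (simp add: field_simps)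
    then have "k > \<lfloor>b * real N\<rfloor>" by linarith
    then have "real_of_int k > real_of_int (\<lfloor>b * real N\<rfloor> + 1) - 1/2" by linarith
    then have "real_of_int k / real N > (real_of_int (\<lfloor>b * real N\<rfloor> + 1) - 1/2) / real N"
      using n by (simp add: divide_strict_right_mono)
    then show ?thesis unfolding hhi_def by simp
  qed
qed

lemma lattice_in:
  assumes N: "N > 0" and k: "a \<le> real_of_int k / real N" "real_of_int k / real N \<le> b"
  shows "hlo a N \<le> real_of_int k / real N - 1 / (2 * real N)" "real_of_int k / real N + 1 / (2 * real N) \<le> hhi b N"
proof -
  have n: "real N > 0" using N by simp
  have "real_of_int k \<ge> a * real N" using k(1) n by (simp add: field_simps)
  then have "k \<ge> \<lceil>a * real N\<rceil>" by (simp add: ceiling_le_iff)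
  then have "real_of_int \<lceil>a * real N\<rceil> - 1/2 \<le> real_of_int k - 1/2" by linarith
  then have "(real_of_int \<lceil>a * real N\<rceil> - 1/2) / real N \<le> (real_of_int k - 1/2) / real N"
    using n by (simp add: divide_right_mono)
  then show "hlo a N \<le> real_of_int k / real N - 1 / (2 * real N)" unfolding hlo_def using n by (simp add: field_simps)
  have "real_of_int k \<le> b * real N" using k(2) n by (simp add: field_simps)
  then have "k \<le> \<lfloor>b * real N\<rfloor>" by (simp add: le_floor_iff)
  then have "real_of_int k + 1/2 \<le> real_of_int (\<lfloor>b * real N\<rfloor> + 1) - 1/2" by linarith
  then have "(real_of_int k + 1/2) / real N \<le> (real_of_int (\<lfloor>b * real N\<rfloor> + 1) - 1/2) / real N"
    using n by (simp add: divide_right_mono)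
  then show "real_of_int k / real N + 1 / (2 * real N) \<le> hhi b N" unfolding hhi_def using n by (simp add: field_simps)
qed

lemma real_seg:
  assumes "z \<in> closed_segment (complex_of_real u) (complex_of_real v)"
  shows "Im z = 0 \<and> min u v \<le> Re z \<and> Re z \<le> max u v"
proof -
  from assms obtain t where t: "0 \<le> t" "t \<le> 1" "z = (1 - t) *\<^sub>R complex_of_real u + t *\<^sub>R complex_of_real v"
    unfolding closed_segment_def by blast
  then have re: "Re z = (1 - t) * u + t * v" and "Im z = 0" by simp_all
  moreover have "(1 - t) * u + t * v \<le> max u v"
  proof -
    have "(1 - t) * u \<le> (1 - t) * max u v" "t * v \<le> t * max u v" using t by (intro mult_left_mono; simp)+
    then show ?thesis by (simp add: algebra_simps)
  qed
  moreover have "min u v \<le> (1 - t) * u + t * v"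
  proof -
    have "(1 - t) * min u v \<le> (1 - t) * u" "t * min u v \<le> t * v" using t by (intro mult_left_mono; simp)+
    then show ?thesis by (simp add: algebra_simps)
  qed
  ultimately show ?thesis by simp
qed

lemma hlo_le_hhi:
  assumes "N > 0" "a < b"
  shows "hlo a N \<le> hhi b N"
proof -
  have n: "real N > 0" using assms by simp
  have "a * real N < b * real N" using assms n by simp
  moreover have f: "b * real N < real_of_int \<lfloor>b * real N\<rfloor> + 1" by linarith
  ultimately have "a * real N \<le> real_of_int \<lfloor>b * real N\<rfloor> + 1" by linarith
  then have "a * real N \<le> real_of_int (\<lfloor>b * real N\<rfloor> + 1)" by simp
  then have "\<lceil>a * real N\<rceil> \<le> \<lfloor>b * real N\<rfloor> + 1" by (simp only: ceiling_le_iff)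
  then have "real_of_int \<lceil>a * real N\<rceil> - 1/2 \<le> real_of_int (\<lfloor>b * real N\<rfloor> + 1) - 1/2"
    by linarith
  then show ?thesis unfolding hlo_def hhi_def using n by (simp add: divide_right_mono)
qed

context
  fixes \<gamma>u \<gamma>l :: "real \<Rightarrow> complex" and N :: nat and a b :: real and D :: "complex set" and a0 b0 :: complex
  assumes N: "N > 0" and ab: "a < b"
    and u: "valid_path \<gamma>u" "pathstart \<gamma>u = a0" "pathfinish \<gamma>u = b0" "path_image \<gamma>u \<subseteq> D"
       "\<forall>z\<in>path_image \<gamma>u. 0 < Im z \<or> z = a0 \<or> z = b0"
       "\<forall>h. h holomorphic_on D \<longrightarrow> contour_integral \<gamma>u h = contour_integral (linepath a0 b0) h"
    and l: "valid_path \<gamma>l" "pathstart \<gamma>l = a0" "pathfinish \<gamma>l = b0" "path_image \<gamma>l \<subseteq> D"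
       "\<forall>z\<in>path_image \<gamma>l. Im z < 0 \<or> z = a0 \<or> z = b0"
       "\<forall>h. h holomorphic_on D \<longrightarrow> contour_integral \<gamma>l h = contour_integral (linepath a0 b0) h"
    and a0: "a0 = complex_of_real (hlo a N)" and b0: "b0 = complex_of_real (hhi b N)"
begin

lemma wjoin:
  assumes "z \<notin> path_image \<gamma>l" "z \<notin> path_image \<gamma>u"
  shows "winding_number (\<gamma>l +++ reversepath \<gamma>u) z = winding_number \<gamma>l z - winding_number \<gamma>u z"
proof -
  have "winding_number (\<gamma>l +++ reversepath \<gamma>u) z = winding_number \<gamma>l z + winding_number (reversepath \<gamma>u) z"
    using assms u(1,3) l(1,3) by (intro winding_number_join) (auto simp: valid_path_imp_path)
  also have "winding_number (reversepath \<gamma>u) z = - winding_number \<gamma>u z"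
    using assms u(1) by (intro winding_number_reversepath) (auto simp: valid_path_imp_path)
  finally show ?thesis by simp
qed

lemma winding_outD:
  assumes z: "z \<notin> D"
  shows "winding_number (\<gamma>l +++ reversepath \<gamma>u) z = 0"
proof -
  have nz: "z \<notin> path_image \<gamma>l" "z \<notin> path_image \<gamma>u" using z u(4) l(4) by auto
  have hol: "(\<lambda>w. 1 / (w - z)) holomorphic_on D" using z by (intro holomorphic_intros) auto
  have "winding_number \<gamma>l z = 1/(2*pi*\<i>) * contour_integral \<gamma>l (\<lambda>w. 1 / (w - z))"
    by (rule winding_number_valid_path[OF l(1) nz(1)])
  also have "\<dots> = 1/(2*pi*\<i>) * contour_integral \<gamma>u (\<lambda>w. 1 / (w - z))"
    using u(6) l(6) hol by simp
  also have "\<dots> = winding_number \<gamma>u z"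
    by (rule winding_number_valid_path[OF u(1) nz(2), symmetric])
  finally show ?thesis using wjoin[OF nz] by simp
qed

lemma lat_not_on:
  "complex_of_real (real_of_int k / real N) \<notin> path_image \<gamma>l"
  "complex_of_real (real_of_int k / real N) \<notin> path_image \<gamma>u"
  using l(5) u(5) lattice_ne_hlo[OF N, of k a] lattice_ne_hhi[OF N, of k b] unfolding a0 b0 by force+

lemma lin_image:
  assumes "z \<in> path_image (linepath a0 b0)"
  shows "Im z = 0 \<and> hlo a N \<le> Re z \<and> Re z \<le> hhi b N"
  using real_seg[of z "hlo a N" "hhi b N"] assms hlo_le_hhi[OF N ab] unfolding a0 b0 by simp

lemma winding_lat_out:
  assumes k: "\<not> (a \<le> real_of_int k / real N \<and> real_of_int k / real N \<le> b)"
  shows "winding_number (\<gamma>l +++ reversepath \<gamma>u) (complex_of_real (real_of_int k / real N)) = 0"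
proof -
  define x where "x = real_of_int k / real N"
  define p where "p = complex_of_real x"
  have xo: "x < hlo a N \<or> x > hhi b N" using lattice_out[OF N k] unfolding x_def .
  have linH: "path_image (linepath a0 b0) \<subseteq> {z. Im z \<ge> 0} - {p}" "path_image (linepath a0 b0) \<subseteq> {z. Im z \<le> 0} - {p}"
    using lin_image xo unfolding p_def by fastforce+
  have uH: "path_image \<gamma>u \<subseteq> {z. Im z \<ge> 0} - {p}"
    using u(5) lat_not_on(2)[of k] unfolding a0 b0 p_def x_def by fastforce
  have lH: "path_image \<gamma>l \<subseteq> {z. Im z \<le> 0} - {p}"
    using l(5) lat_not_on(1)[of k] unfolding a0 b0 p_def x_def by fastforce
  have hu: "homotopic_paths ({z. Im z \<ge> 0} - {p}) \<gamma>u (linepath a0 b0)"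
    unfolding p_def using u(1,2,3) uH linH(1)
    by (intro homotopic_in_starlike[OF starlike_upper_punct]) (auto simp: valid_path_imp_path p_def)
  have hl: "homotopic_paths ({z. Im z \<le> 0} - {p}) \<gamma>l (linepath a0 b0)"
    unfolding p_def using l(1,2,3) lH linH(2)
    by (intro homotopic_in_starlike[OF starlike_lower_punct]) (auto simp: valid_path_imp_path p_def)
  have "winding_number \<gamma>u p = winding_number (linepath a0 b0) p"
    by (rule winding_number_homotopic_paths[OF homotopic_paths_subset[OF hu]]) auto
  moreover have "winding_number \<gamma>l p = winding_number (linepath a0 b0) p"
    by (rule winding_number_homotopic_paths[OF homotopic_paths_subset[OF hl]]) auto
  ultimately show ?thesis using wjoin[OF lat_not_on[of k]] unfolding p_def x_def by simp
qed

lemma winding_lat_in: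
  assumes k: "a \<le> real_of_int k / real N" "real_of_int k / real N \<le> b"
  shows "winding_number (\<gamma>l +++ reversepath \<gamma>u) (complex_of_real (real_of_int k / real N)) = 1"
proof -
  define x where "x = real_of_int k / real N"
  define p where "p = complex_of_real x"
  define r where "r = 1 / (2 * real N)"
  have r: "r > 0" using N by (simp add: r_def)
  have lo: "hlo a N \<le> x - r" "x + r \<le> hhi b N" using lattice_in[OF N k] unfolding x_def r_def by auto
  define l1 where "l1 = linepath a0 (complex_of_real (x - r))"
  define l2 where "l2 = linepath (complex_of_real (x + r)) b0"
  define arcD where "arcD = part_circlepath p r pi (2 * pi)"
  define arcU where "arcU = part_circlepath p r 0 pi"
  have e2: "exp (\<i> * complex_of_real (2 * pi)) = 1"
    by (metis exp_two_pi_i' mult.commute of_real_mult of_real_numeral)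
  have e2': "exp (\<i> * (2 * complex_of_real pi)) = 1"
    using exp_two_pi_i by (metis mult.commute)
  have ends: "pathstart arcD = complex_of_real (x - r)" "pathfinish arcD = complex_of_real (x + r)"
    "pathstart arcU = complex_of_real (x + r)" "pathfinish arcU = complex_of_real (x - r)"
    unfolding arcD_def arcU_def p_def by (simp_all add: e2 e2')
  have pl1: "path_image l1 \<subseteq> {z. Im z = 0 \<and> Re z < x}" unfolding l1_def
    using real_seg[of _ "hlo a N" "x - r"] lo r unfolding a0 by fastforce
  have pl2: "path_image l2 \<subseteq> {z. Im z = 0 \<and> Re z > x}" unfolding l2_def
    using real_seg[of _ "x + r" "hhi b N"] lo r unfolding b0 by fastforce
  have arcDim: "path_image arcD \<subseteq> {z. Im z \<le> 0} - {p}"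
  proof
    fix z assume "z \<in> path_image arcD"
    then obtain t where t: "t \<in> closed_segment pi (2 * pi)" "z = p + complex_of_real r * cis t"
      unfolding arcD_def path_image_part_circlepath' by blast
    have t': "pi \<le> t" "t \<le> 2 * pi" using t(1) by (auto simp: closed_segment_eq_real_ivl)
    have "sin t \<le> 0"
    proof (cases "t = 2 * pi")
      case True then show ?thesis by simp
    next
      case False then show ?thesis using t' by (intro sin_le_zero) auto
    qed
    then have "Im z \<le> 0" using t(2) r by (simp add: p_def mult_nonneg_nonpos)
    moreover have "z \<noteq> p" using t(2) r by (simp add: cis_neq_zero)
    ultimately show "z \<in> {z. Im z \<le> 0} - {p}" by simp
  qed
  have arcUim: "path_image arcU \<subseteq> {z. Im z \<ge> 0} - {p}"
  proof
    fix z assume "z \<in> path_image arcU"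
    then obtain t where t: "t \<in> closed_segment 0 pi" "z = p + complex_of_real r * cis t"
      unfolding arcU_def path_image_part_circlepath' by blast
    have t': "0 \<le> t" "t \<le> pi" using t(1) by (auto simp: closed_segment_eq_real_ivl)
    have "sin t \<ge> 0" using t' by (intro sin_ge_zero) auto
    then have "Im z \<ge> 0" using t(2) r by (simp add: p_def)
    moreover have "z \<noteq> p" using t(2) r by (simp add: cis_neq_zero)
    ultimately show "z \<in> {z. Im z \<ge> 0} - {p}" by simp
  qed
  have l1H: "path_image l1 \<subseteq> {z. Im z \<le> 0} - {p}" "path_image l1 \<subseteq> {z. Im z \<ge> 0} - {p}"
    using pl1 unfolding p_def by force+
  have l2H: "path_image l2 \<subseteq> {z. Im z \<le> 0} - {p}" "path_image l2 \<subseteq> {z. Im z \<ge> 0} - {p}"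
    using pl2 unfolding p_def by force+
  define Pl where "Pl = l1 +++ (arcD +++ l2)"
  define Pu where "Pu = reversepath l2 +++ (arcU +++ reversepath l1)"
  have vp: "valid_path l1" "valid_path l2" "valid_path arcD" "valid_path arcU"
    unfolding l1_def l2_def arcD_def arcU_def by auto
  have pp: "path l1" "path l2" "path arcD" "path arcU" using vp by (auto simp: valid_path_imp_path)
  have le: "pathstart l1 = a0" "pathfinish l1 = complex_of_real (x - r)" "pathstart l2 = complex_of_real (x + r)" "pathfinish l2 = b0"
    unfolding l1_def l2_def by simp_all
  have j1: "pathfinish arcD = pathstart l2" "pathfinish l1 = pathstart (arcD +++ l2)"
    using ends le by simp_all
  have j2: "pathfinish arcU = pathstart (reversepath l1)" "pathfinish (reversepath l2) = pathstart (arcU +++ reversepath l1)"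
    using ends le by simp_all
  have PlH: "path Pl" "path_image Pl \<subseteq> {z. Im z \<le> 0} - {p}" "pathstart Pl = a0" "pathfinish Pl = b0"
  proof -
    show "path Pl" unfolding Pl_def using pp j1 by (intro path_join_imp) auto
    have "path_image Pl = path_image l1 \<union> (path_image arcD \<union> path_image l2)"
      unfolding Pl_def using j1 by (simp add: path_image_join)
    then show "path_image Pl \<subseteq> {z. Im z \<le> 0} - {p}" using l1H l2H arcDim by blast
    show "pathstart Pl = a0" "pathfinish Pl = b0" unfolding Pl_def using le by simp_all
  qed
  have PuH: "path Pu" "path_image Pu \<subseteq> {z. Im z \<ge> 0} - {p}" "pathstart Pu = b0" "pathfinish Pu = a0"
  proof -
    show "path Pu" unfolding Pu_def using pp j2 by (intro path_join_imp) auto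
    have "path_image Pu = path_image l2 \<union> (path_image arcU \<union> path_image l1)"
      unfolding Pu_def using j2 by (simp add: path_image_join path_image_reversepath)
    then show "path_image Pu \<subseteq> {z. Im z \<ge> 0} - {p}" using l1H l2H arcUim by blast
    show "pathstart Pu = b0" "pathfinish Pu = a0" unfolding Pu_def using le by simp_all
  qed
  have pnot: "p \<notin> path_image \<gamma>l" "p \<notin> path_image \<gamma>u" using lat_not_on[of k] unfolding p_def x_def by auto
  have lH: "path_image \<gamma>l \<subseteq> {z. Im z \<le> 0} - {p}"
    using l(5) pnot(1) unfolding a0 b0 by fastforce
  have uH: "path_image (reversepath \<gamma>u) \<subseteq> {z. Im z \<ge> 0} - {p}"
    using u(5) pnot(2) unfolding a0 b0 path_image_reversepath by fastforce
  have hl: "homotopic_paths ({z. Im z \<le> 0} - {p}) \<gamma>l Pl"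
    unfolding p_def using l(1,2,3) lH PlH
    by (intro homotopic_in_starlike[OF starlike_lower_punct]) (auto simp: valid_path_imp_path p_def)
  have hu: "homotopic_paths ({z. Im z \<ge> 0} - {p}) (reversepath \<gamma>u) Pu"
    unfolding p_def using u(1,2,3) uH PuH
    by (intro homotopic_in_starlike[OF starlike_upper_punct]) (auto simp: valid_path_imp_path p_def)
  have pn: "p \<notin> path_image l1" "p \<notin> path_image l2" "p \<notin> path_image arcD" "p \<notin> path_image arcU"
    using l1H l2H arcDim arcUim by auto
  have "winding_number \<gamma>l p = winding_number Pl p"
    by (rule winding_number_homotopic_paths[OF homotopic_paths_subset[OF hl]]) auto
  also have "\<dots> = winding_number l1 p + (winding_number arcD p + winding_number l2 p)"
    unfolding Pl_def using pp pn j1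
    by (simp add: winding_number_join path_image_join not_in_path_image_join)
  finally have wl: "winding_number \<gamma>l p = winding_number l1 p + (winding_number arcD p + winding_number l2 p)" .
  have "winding_number (reversepath \<gamma>u) p = winding_number Pu p"
    by (rule winding_number_homotopic_paths[OF homotopic_paths_subset[OF hu]]) auto
  also have "\<dots> = winding_number (reversepath l2) p + (winding_number arcU p + winding_number (reversepath l1) p)"
    unfolding Pu_def using pp pn j2
    by (simp add: winding_number_join path_image_join not_in_path_image_join path_image_reversepath)
  also have "\<dots> = - winding_number l2 p + (winding_number arcU p - winding_number l1 p)"
    using pp pn by (simp add: winding_number_reversepath)
  finally have wu: "winding_number (reversepath \<gamma>u) p = - winding_number l2 p + (winding_number arcU p - winding_number l1 p)" .
  have "winding_number (\<gamma>l +++ reversepath \<gamma>u) p = winding_number \<gamma>l p + winding_number (reversepath \<gamma>u) p"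
    using pnot u(1,3) l(1,3) by (intro winding_number_join) (auto simp: valid_path_imp_path)
  also have "\<dots> = winding_number arcD p + winding_number arcU p" using wl wu by simp
  also have "\<dots> = 1"
    unfolding arcD_def arcU_def using r
    by (simp add: winding_number_part_circlepath_centre field_simps)
  finally show ?thesis unfolding p_def x_def .
qed

end

lemma exp_eq_1_lattice:
  fixes N :: nat
  assumes "N > 0" "exp (2 * of_real pi * \<i> * of_nat N * z) = 1"
  shows "\<exists>k::int. z = complex_of_real (real_of_int k / real N)"
proof -
  from assms(2) obtain n :: int where "Re (2 * of_real pi * \<i> * of_nat N * z) = 0"
     "Im (2 * of_real pi * \<i> * of_nat N * z) = of_int (2 * n) * pi"
    unfolding exp_eq_1 by blast
  then have "Im z = 0" "Re z * N = n" using assms(1) pi_gt_zero by (auto simp: field_simps)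
  then show ?thesis using assms(1) by (intro exI[of _ n]) (auto simp: complex_eq_iff field_simps)
qed

lemma lattice_dist:
  assumes N: "N > 0" and d: "dist (complex_of_real (real_of_int j / real N)) (complex_of_real (real_of_int k / real N)) < 1 / real N"
  shows "j = k"
proof -
  have n: "real N > 0" using N by simp
  have "dist (complex_of_real (real_of_int j / real N)) (complex_of_real (real_of_int k / real N)) = \<bar>real_of_int j / real N - real_of_int k / real N\<bar>"
    unfolding dist_norm of_real_diff[symmetric] norm_of_real ..
  also have "\<dots> = \<bar>real_of_int j - real_of_int k\<bar> / real N"
    using n by (simp add: diff_divide_distrib[symmetric] abs_divide)
  finally have "dist (complex_of_real (real_of_int j / real N)) (complex_of_real (real_of_int k / real N)) = \<bar>real_of_int j - real_of_int k\<bar> / real N" .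
  then have "\<bar>real_of_int j - real_of_int k\<bar> / real N < 1 / real N" using d by simp
  then have "\<bar>real_of_int j - real_of_int k\<bar> < 1" using n by (simp add: divide_strict_right_mono_neg field_simps)
  then show ?thesis by linarith
qed

lemma main_identity:
  fixes \<psi>N :: "complex \<Rightarrow> complex" and \<gamma>u \<gamma>l :: "real \<Rightarrow> complex" and N :: nat and a b :: real
    and D :: "complex set" and a0 b0 :: complex
  assumes N: "N > 0" and ab: "a < b" and D: "open D" "connected D" and hN: "\<psi>N holomorphic_on D"
    and seg: "complex_of_real ` {a..b} \<subseteq> D"
    and u: "valid_path \<gamma>u" "pathstart \<gamma>u = a0" "pathfinish \<gamma>u = b0" "path_image \<gamma>u \<subseteq> D"
       "\<forall>z\<in>path_image \<gamma>u. 0 < Im z \<or> z = a0 \<or> z = b0"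
       "\<forall>h. h holomorphic_on D \<longrightarrow> contour_integral \<gamma>u h = contour_integral (linepath a0 b0) h"
    and l: "valid_path \<gamma>l" "pathstart \<gamma>l = a0" "pathfinish \<gamma>l = b0" "path_image \<gamma>l \<subseteq> D"
       "\<forall>z\<in>path_image \<gamma>l. Im z < 0 \<or> z = a0 \<or> z = b0"
       "\<forall>h. h holomorphic_on D \<longrightarrow> contour_integral \<gamma>l h = contour_integral (linepath a0 b0) h"
    and a0: "a0 = complex_of_real (hlo a N)" and b0: "b0 = complex_of_real (hhi b N)"
  shows "lattice_sum a b N \<psi>N = contour_integral (linepath a0 b0) (\<lambda>z. exp (of_nat N * \<psi>N z))
          + contour_integral \<gamma>l (\<lambda>z. exp (of_nat N * \<psi>N z) / (exp (2 * of_real pi * \<i> * of_nat N * z) - 1))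
          + contour_integral \<gamma>u (\<lambda>z. exp (of_nat N * \<psi>N z) / (exp (- 2 * of_real pi * \<i> * of_nat N * z) - 1))"
proof -
  note ctx = N ab u l a0 b0
  define n where "n = real N"
  have n: "n > 0" using N by (simp add: n_def)
  define f where "f = (\<lambda>z. exp (of_nat N * \<psi>N z))"
  define E where "E = (\<lambda>z. exp (2 * of_real pi * \<i> * of_nat N * z))"
  define F where "F = (\<lambda>z. f z * (of_real pi * \<i>) * (E z + 1))"
  define g where "g = (\<lambda>z. F z / (E z - 1))"
  define lat where "lat = (\<lambda>k::int. complex_of_real (real_of_int k / real N))"
  define Lat where "Lat = range lat"
  define I where "I = {k::int. a \<le> real_of_int k / real N \<and> real_of_int k / real N \<le> b}"
  define P where "P = lat ` I"
  define S where "S = D - (Lat - P)"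
  define \<Gamma> where "\<Gamma> = \<gamma>l +++ reversepath \<gamma>u"
  have E1: "E z = 1 \<longleftrightarrow> z \<in> Lat" for z
  proof
    assume "E z = 1"
    then show "z \<in> Lat" using exp_eq_1_lattice[OF N, of z] unfolding E_def Lat_def lat_def by auto
  next
    assume "z \<in> Lat"
    then show "E z = 1" using exp_lattice[OF N] unfolding E_def Lat_def lat_def by auto
  qed
  have injlat: "inj lat" unfolding lat_def inj_def using N by (auto simp: divide_cancel_right)
  have finI: "finite I"
  proof (rule finite_subset)
    show "I \<subseteq> {\<lceil>a * real N\<rceil>..\<lfloor>b * real N\<rfloor>}"
    proof
      fix k assume "k \<in> I"
      then have "a * real N \<le> real_of_int k" "real_of_int k \<le> b * real N" using n unfolding I_def n_def by (auto simp: field_simps)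
      then show "k \<in> {\<lceil>a * real N\<rceil>..\<lfloor>b * real N\<rfloor>}" by (simp add: ceiling_le_iff le_floor_iff)
    qed
  qed simp
  have finP: "finite P" unfolding P_def using finI by simp
  have clo: "closed (Lat - P)"
  proof (rule discrete_imp_closed[of "1 / real N"])
    show "0 < 1 / real N" using n n_def by simp
    show "\<forall>x\<in>Lat - P. \<forall>y\<in>Lat - P. dist y x < 1 / real N \<longrightarrow> y = x"
      using lattice_dist[OF N] unfolding Lat_def lat_def by blast
  qed
  have So: "open S" unfolding S_def using D(1) clo by (rule open_Diff)
  have Sc: "connected S" unfolding S_def
  proof (rule connected_open_diff_countable)
    show "countable (Lat - P)" unfolding Lat_def by (rule countable_Diff) auto
  qed (use D in auto)
  have SP: "S - P = D - Lat" unfolding S_def P_def Lat_def by auto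
  have hol_g: "g holomorphic_on S - P"
  proof -
    have "\<psi>N holomorphic_on S - P" using hN by (rule holomorphic_on_subset) (auto simp: SP)
    moreover have "\<forall>z\<in>S - P. E z - 1 \<noteq> 0" using E1 by (auto simp: SP)
    ultimately show ?thesis unfolding g_def F_def f_def E_def by (intro holomorphic_intros) auto
  qed
  have pnot: "z \<notin> Lat" if "z \<in> path_image \<gamma>l \<union> path_image \<gamma>u" for z
  proof
    assume "z \<in> Lat"
    then obtain k where k: "z = lat k" unfolding Lat_def by blast
    have "Im z = 0" using k by (simp add: lat_def)
    then have "z = a0 \<or> z = b0" using that u(5) l(5) by force
    then show False using k lattice_ne_hlo[OF N, of k a] lattice_ne_hhi[OF N, of k b] by (auto simp: lat_def a0 b0)
  qed
  have vG: "valid_path \<Gamma>" unfolding \<Gamma>_def using u l by (intro valid_path_join) auto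
  have cG: "pathfinish \<Gamma> = pathstart \<Gamma>" unfolding \<Gamma>_def using u l by simp
  have piG: "path_image \<Gamma> = path_image \<gamma>l \<union> path_image \<gamma>u"
    unfolding \<Gamma>_def using u l by (simp add: path_image_join path_image_reversepath)
  have piS: "path_image \<Gamma> \<subseteq> S - P" unfolding piG SP using pnot u(4) l(4) by blast
  have wind0: "\<forall>z. z \<notin> S \<longrightarrow> winding_number \<Gamma> z = 0"
  proof (intro allI impI)
    fix z assume z: "z \<notin> S"
    show "winding_number \<Gamma> z = 0"
    proof (cases "z \<in> D")
      case False
      then show ?thesis unfolding \<Gamma>_def by (rule winding_outD[OF ctx])
    next
      case True
      then have "z \<in> Lat - P" using z unfolding S_def by blast
      then obtain k where k: "z = lat k" "k \<notin> I" unfolding Lat_def P_def by blast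
      then have "\<not> (a \<le> real_of_int k / real N \<and> real_of_int k / real N \<le> b)" unfolding I_def by blast
      from winding_lat_out[OF ctx this] show ?thesis unfolding \<Gamma>_def k(1) lat_def .
    qed
  qed
  have res: "contour_integral \<Gamma> g = 2 * pi * \<i> * (\<Sum>p\<in>P. winding_number \<Gamma> p * residue g p)"
    by (rule Residue_theorem[OF So Sc finP hol_g vG cG piS wind0])
  have resP: "winding_number \<Gamma> p * residue g p = f p / of_nat N" if p: "p \<in> P" for p
  proof -
    obtain k where k: "k \<in> I" "p = lat k" using p unfolding P_def by blast
    have w: "winding_number \<Gamma> p = 1"
      using winding_lat_in[OF ctx, of k] k unfolding I_def \<Gamma>_def lat_def by auto
    have pD: "p \<in> D"
    proof -
      have "real_of_int k / real N \<in> {a..b}" using k(1) unfolding I_def by auto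
      then have "complex_of_real (real_of_int k / real N) \<in> D" using seg by blast
      then show ?thesis using k(2) unfolding lat_def by simp
    qed
    define S0 where "S0 = D \<inter> ball p (1 / real N)"
    have S0: "open S0" "p \<in> S0" unfolding S0_def using D(1) pD n n_def by auto
    have FS0: "F holomorphic_on S0" unfolding F_def f_def E_def
      by (intro holomorphic_intros holomorphic_on_subset[OF hN]) (auto simp: S0_def)
    have gS0: "(\<lambda>w. F w / (E w - 1)) holomorphic_on S0 - {p}"
    proof -
      have "\<forall>z\<in>S0 - {p}. E z - 1 \<noteq> 0"
      proof
        fix z assume z: "z \<in> S0 - {p}"
        show "E z - 1 \<noteq> 0"
        proof
          assume "E z - 1 = 0"
          then have "z \<in> Lat" using E1 by simp
          then obtain j where j: "z = lat j" unfolding Lat_def by blast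
          have "dist z p < 1 / real N" using z unfolding S0_def by (simp add: dist_commute)
          then have "j = k" using lattice_dist[OF N] j k(2) unfolding lat_def by blast
          then show False using z j k(2) by simp
        qed
      qed
      then show ?thesis using FS0 unfolding E_def
        by (intro holomorphic_intros holomorphic_on_subset[OF FS0]) auto
    qed
    have Ep: "E p = 1" using E1 k(2) unfolding Lat_def by auto
    have dE: "(E has_field_derivative (2 * of_real pi * \<i> * of_nat N * E p)) (at p)"
      unfolding E_def by (auto intro!: derivative_eq_intros)
    have "residue g p = F p / (2 * of_real pi * \<i> * of_nat N * E p)"
      unfolding g_def by (rule residue_simple_zero[OF S0 FS0 gS0 dE Ep]) (use N Ep in simp)
    also have "\<dots> = f p / of_nat N" unfolding F_def Ep using N by (simp add: field_simps)
    finally show ?thesis using w by simp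
  qed
  have sumP: "(\<Sum>p\<in>P. winding_number \<Gamma> p * residue g p) = lattice_sum a b N \<psi>N"
  proof -
    have "(\<Sum>p\<in>P. winding_number \<Gamma> p * residue g p) = (\<Sum>p\<in>P. f p / of_nat N)"
      using resP by (rule sum.cong[OF refl])
    also have "\<dots> = (\<Sum>k\<in>I. f (lat k) / of_nat N)"
      unfolding P_def using sum.reindex[OF inj_on_subset[OF injlat subset_UNIV], of "\<lambda>p. f p / of_nat N" I]
      by (simp add: o_def)
    also have "\<dots> = lattice_sum a b N \<psi>N"
      unfolding lattice_sum_def I_def f_def lat_def by (simp add: sum_divide_distrib)
    finally show ?thesis .
  qed
  have cloL: "closed Lat"
  proof (rule discrete_imp_closed[of "1 / real N"])
    show "0 < 1 / real N" using n n_def by simp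
    show "\<forall>x\<in>Lat. \<forall>y\<in>Lat. dist y x < 1 / real N \<longrightarrow> y = x"
      using lattice_dist[OF N] unfolding Lat_def lat_def by blast
  qed
  define Om where "Om = D - Lat"
  have Oo: "open Om" unfolding Om_def using D(1) cloL by (rule open_Diff)
  have imO: "path_image \<gamma>l \<subseteq> Om" "path_image \<gamma>u \<subseteq> Om" unfolding Om_def using pnot u(4) l(4) by blast+
  define E' where "E' = (\<lambda>z. exp (- 2 * of_real pi * \<i> * of_nat N * z))"
  have E'inv: "E' z = inverse (E z)" for z
  proof -
    have "- 2 * of_real pi * \<i> * of_nat N * z = - (2 * of_real pi * \<i> * of_nat N * z)" by simp
    then show ?thesis unfolding E'_def E_def by (simp only: exp_minus)
  qed
  have Enz: "E z \<noteq> 0" for z unfolding E_def by simp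
  define Gl where "Gl = (\<lambda>z. f z / (E z - 1))"
  define Gu where "Gu = (\<lambda>z. f z / (E' z - 1))"
  have E'1: "E' z \<noteq> 1" if "z \<in> Om" for z
  proof
    assume "E' z = 1"
    then have "E z = 1" unfolding E'inv by (metis inverse_1 inverse_inverse_eq)
    then show False using that E1 unfolding Om_def by blast
  qed
  have E1': "E z \<noteq> 1" if "z \<in> Om" for z using that E1 unfolding Om_def by blast
  have idl: "g z = of_real pi * \<i> * f z + 2 * of_real pi * \<i> * Gl z" if "z \<in> Om" for z
  proof -
    have "E z - 1 \<noteq> 0" using E1'[OF that] by simp
    then show ?thesis unfolding g_def F_def Gl_def by (simp add: field_simps)
  qed
  have idu: "g z = - (of_real pi * \<i>) * f z - 2 * of_real pi * \<i> * Gu z" if "z \<in> Om" for z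
  proof -
    have e1: "E z - 1 \<noteq> 0" using E1'[OF that] by simp
    have e2: "inverse (E z) - 1 \<noteq> 0" using E1'[OF that] by (metis eq_iff_diff_eq_0 inverse_1 inverse_inverse_eq)
    have e3: "1 - E z \<noteq> 0" using e1 by (metis eq_iff_diff_eq_0)
    have gu: "Gu z = f z * E z / (1 - E z)"
      unfolding Gu_def E'inv using Enz[of z] e3 by (simp add: field_simps)
    have "g z = - (of_real pi * \<i>) * f z - 2 * of_real pi * \<i> * (f z * E z / (1 - E z))"
      unfolding g_def F_def using e1 e3 by (simp add: field_simps)
    then show ?thesis unfolding gu .
  qed
  have fD: "f holomorphic_on D" unfolding f_def by (intro holomorphic_intros hN)
  have fO: "f holomorphic_on Om" using fD by (rule holomorphic_on_subset) (auto simp: Om_def)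
  have GlO: "Gl holomorphic_on Om" unfolding Gl_def E_def using fO E1' unfolding E_def
    by (intro holomorphic_intros) auto
  have GuO: "Gu holomorphic_on Om" unfolding Gu_def E'_def using fO E'1 unfolding E'_def
    by (intro holomorphic_intros) auto
  have gO: "g holomorphic_on Om" using hol_g unfolding SP Om_def .
  have ints: "f contour_integrable_on \<gamma>l" "Gl contour_integrable_on \<gamma>l" "g contour_integrable_on \<gamma>l"
     "f contour_integrable_on \<gamma>u" "Gu contour_integrable_on \<gamma>u" "g contour_integrable_on \<gamma>u"
    using contour_integrable_holomorphic_simple[OF fO Oo] contour_integrable_holomorphic_simple[OF GlO Oo]
      contour_integrable_holomorphic_simple[OF GuO Oo] contour_integrable_holomorphic_simple[OF gO Oo]
      imO u(1) l(1) by auto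
  have intr: "g contour_integrable_on reversepath \<gamma>u"
    using ints(6) u(1) by (simp add: contour_integrable_reversepath_eq)
  define J where "J = contour_integral (linepath a0 b0) f"
  have Jl: "contour_integral \<gamma>l f = J" and Ju: "contour_integral \<gamma>u f = J"
    using l(6) u(6) fD unfolding J_def by auto
  have "contour_integral \<Gamma> g = contour_integral \<gamma>l g + contour_integral (reversepath \<gamma>u) g"
    unfolding \<Gamma>_def using ints(3) intr l(1) u(1) by (simp add: contour_integral_join)
  also have "contour_integral (reversepath \<gamma>u) g = - contour_integral \<gamma>u g"
    by (rule contour_integral_reversepath[OF u(1)])
  also have "contour_integral \<gamma>l g = contour_integral \<gamma>l (\<lambda>z. of_real pi * \<i> * f z + 2 * of_real pi * \<i> * Gl z)"
    using idl imO by (intro contour_integral_eq) auto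
  also have "\<dots> = of_real pi * \<i> * J + 2 * of_real pi * \<i> * contour_integral \<gamma>l Gl"
    using ints by (simp add: contour_integral_add contour_integral_lmul contour_integrable_lmul Jl)
  also have "contour_integral \<gamma>u g = contour_integral \<gamma>u (\<lambda>z. - (of_real pi * \<i>) * f z - 2 * of_real pi * \<i> * Gu z)"
    using idu imO by (intro contour_integral_eq) auto
  also have "\<dots> = - (of_real pi * \<i>) * J - 2 * of_real pi * \<i> * contour_integral \<gamma>u Gu"
  proof -
    have "contour_integral \<gamma>u (\<lambda>z. - (of_real pi * \<i>) * f z - 2 * of_real pi * \<i> * Gu z)
       = contour_integral \<gamma>u (\<lambda>z. - (of_real pi * \<i>) * f z) - contour_integral \<gamma>u (\<lambda>z. 2 * of_real pi * \<i> * Gu z)"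
      by (rule contour_integral_diff) (intro contour_integrable_lmul ints)+
    also have "contour_integral \<gamma>u (\<lambda>z. - (of_real pi * \<i>) * f z) = - (of_real pi * \<i>) * J"
      unfolding Ju[symmetric] by (rule contour_integral_lmul[OF ints(4)])
    also have "contour_integral \<gamma>u (\<lambda>z. 2 * of_real pi * \<i> * Gu z) = 2 * of_real pi * \<i> * contour_integral \<gamma>u Gu"
      by (rule contour_integral_lmul[OF ints(5)])
    finally show ?thesis .
  qed
  finally have "contour_integral \<Gamma> g = 2 * of_real pi * \<i> * (J + contour_integral \<gamma>l Gl + contour_integral \<gamma>u Gu)"
    by (simp add: algebra_simps)
  moreover have "contour_integral \<Gamma> g = 2 * of_real pi * \<i> * lattice_sum a b N \<psi>N"
    using res sumP by simp
  ultimately have "lattice_sum a b N \<psi>N = J + contour_integral \<gamma>l Gl + contour_integral \<gamma>u Gu"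
    by simp
  then show ?thesis unfolding J_def Gl_def Gu_def f_def E_def E'_def .
qed

lemma seg_bound:
  assumes "\<forall>z\<in>closed_segment p q. norm (f z) \<le> e" "norm (q - p) \<le> 1" "e \<ge> 0"
  shows "norm (contour_integral (linepath p q) f) \<le> e"
proof (cases "f contour_integrable_on linepath p q")
  case True
  then have "norm (contour_integral (linepath p q) f) \<le> e * norm (q - p)"
    using assms by (intro contour_integral_bound_linepath) auto
  also have "\<dots> \<le> e * 1" using assms by (intro mult_left_mono) auto
  finally show ?thesis by simp
next
  case False
  then show ?thesis using assms by (simp add: not_integrable_contour_integral)
qed

theorem proposition4p1:
  fixes a b :: real and D :: "complex set"
    and \<psi>s :: "nat \<Rightarrow> complex \<Rightarrow> complex" and \<psi> :: "complex \<Rightarrow> complex"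
    and Cp Cm :: "real \<Rightarrow> complex"
  assumes "a < b"
    and "open D" and "connected D"
    and "complex_of_real ` {a..b} \<subseteq> D"
    and "\<And>N. N \<ge> 1 \<Longrightarrow> \<psi>s N holomorphic_on D"
    and "uniform_limit D \<psi>s \<psi> sequentially"
    and "\<psi> holomorphic_on D"
    and "Re (\<psi> (complex_of_real a)) < 0" and "Re (\<psi> (complex_of_real b)) < 0"
    and "path Cp" and "pathstart Cp = complex_of_real a" and "pathfinish Cp = complex_of_real b"
    and "path_image Cp \<subseteq> region_plus D \<psi>"
    and "homotopic_paths D Cp (linepath (complex_of_real a) (complex_of_real b))"
    and "path Cm" and "pathstart Cm = complex_of_real a" and "pathfinish Cm = complex_of_real b"
    and "path_image Cm \<subseteq> region_minus D \<psi>"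
    and "homotopic_paths D Cm (linepath (complex_of_real a) (complex_of_real b))"
  shows "\<exists>\<epsilon>>0. \<exists>C. \<forall>\<^sub>F N in sequentially.
           norm (lattice_sum a b N (\<psi>s N)
                 - integral {a..b} (\<lambda>t. exp (of_nat N * \<psi>s N (complex_of_real t))))
             \<le> C * exp (- \<epsilon> * real N)"
proof -
  note A = assms
  obtain cu Lu N0u where cu: "cu > 0" "N0u > 0" and U: "\<forall>N\<ge>N0u. \<exists>\<gamma>. valid_path \<gamma> \<and> pathstart \<gamma> = complex_of_real (hlo a N)
      \<and> pathfinish \<gamma> = complex_of_real (hhi b N) \<and> path_image \<gamma> \<subseteq> D
      \<and> (\<forall>z\<in>path_image \<gamma>. 0 < Im z \<or> z = complex_of_real (hlo a N) \<or> z = complex_of_real (hhi b N))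
      \<and> (\<forall>h. h holomorphic_on D \<longrightarrow> contour_integral \<gamma> h = contour_integral (linepath (complex_of_real (hlo a N)) (complex_of_real (hhi b N))) h)
      \<and> norm (contour_integral \<gamma> (\<lambda>z. exp (of_nat N * \<psi>s N z) / (exp (- 2 * of_real pi * \<i> * of_nat N * z) - 1)))
           \<le> Lu * exp (- cu * real N)
      \<and> (\<forall>z \<in> closed_segment (complex_of_real (hlo a N)) (complex_of_real a) \<union> closed_segment (complex_of_real b) (complex_of_real (hhi b N)).
           norm (exp (of_nat N * \<psi>s N z)) \<le> exp (- cu * real N))
      \<and> (\<forall>h. h holomorphic_on D \<longrightarrow> contour_integral (linepath (complex_of_real (hlo a N)) (complex_of_real (hhi b N))) h =
           contour_integral (linepath (complex_of_real (hlo a N)) (complex_of_real a)) h + contour_integral (linepath (complex_of_real a) (complex_of_real b)) h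
           + contour_integral (linepath (complex_of_real b) (complex_of_real (hhi b N))) h)"
    using side_upper[OF A(1,2,4,5,6,7,8,9,10,11,12,13,14)] by blast
  obtain cl Ll N0l where cl: "cl > 0" "N0l > 0" and L: "\<forall>N\<ge>N0l. \<exists>\<gamma>. valid_path \<gamma> \<and> pathstart \<gamma> = complex_of_real (hlo a N)
      \<and> pathfinish \<gamma> = complex_of_real (hhi b N) \<and> path_image \<gamma> \<subseteq> D
      \<and> (\<forall>z\<in>path_image \<gamma>. Im z < 0 \<or> z = complex_of_real (hlo a N) \<or> z = complex_of_real (hhi b N))
      \<and> (\<forall>h. h holomorphic_on D \<longrightarrow> contour_integral \<gamma> h = contour_integral (linepath (complex_of_real (hlo a N)) (complex_of_real (hhi b N))) h)
      \<and> norm (contour_integral \<gamma> (\<lambda>z. exp (of_nat N * \<psi>s N z) / (exp (2 * of_real pi * \<i> * of_nat N * z) - 1)))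
           \<le> Ll * exp (- cl * real N)"
    using side_lower[OF A(1,2,4,5,6,7,8,9,15,16,17,18,19)] by blast
  define \<epsilon> where "\<epsilon> = min cu cl"
  have \<epsilon>: "\<epsilon> > 0" "\<epsilon> \<le> cu" "\<epsilon> \<le> cl" using cu cl by (auto simp: \<epsilon>_def)
  show ?thesis
  proof (rule exI[of _ \<epsilon>], intro conjI exI[of _ "\<bar>Lu\<bar> + \<bar>Ll\<bar> + 2"])
    show "\<epsilon> > 0" by (rule \<epsilon>(1))
    show "\<forall>\<^sub>F N in sequentially.
           norm (lattice_sum a b N (\<psi>s N)
                 - integral {a..b} (\<lambda>t. exp (of_nat N * \<psi>s N (complex_of_real t))))
             \<le> (\<bar>Lu\<bar> + \<bar>Ll\<bar> + 2) * exp (- \<epsilon> * real N)"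
      unfolding eventually_sequentially
    proof (intro exI[of _ "max N0u N0l"] allI impI)
      fix N assume N: "max N0u N0l \<le> N"
      have Npos: "N > 0" and N1: "N \<ge> 1" using N cu by auto
      define a0 where "a0 = complex_of_real (hlo a N)"
      define b0 where "b0 = complex_of_real (hhi b N)"
      define f where "f = (\<lambda>z. exp (of_nat N * \<psi>s N z))"
      have fD: "f holomorphic_on D" unfolding f_def by (intro holomorphic_intros A(5)[OF N1])
      obtain \<gamma>u where gu: "valid_path \<gamma>u" "pathstart \<gamma>u = a0" "pathfinish \<gamma>u = b0" "path_image \<gamma>u \<subseteq> D"
         "\<forall>z\<in>path_image \<gamma>u. 0 < Im z \<or> z = a0 \<or> z = b0"
         "\<forall>h. h holomorphic_on D \<longrightarrow> contour_integral \<gamma>u h = contour_integral (linepath a0 b0) h"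
         "norm (contour_integral \<gamma>u (\<lambda>z. exp (of_nat N * \<psi>s N z) / (exp (- 2 * of_real pi * \<i> * of_nat N * z) - 1)))
           \<le> Lu * exp (- cu * real N)"
         "\<forall>z \<in> closed_segment a0 (complex_of_real a) \<union> closed_segment (complex_of_real b) b0. norm (f z) \<le> exp (- cu * real N)"
         "\<forall>h. h holomorphic_on D \<longrightarrow> contour_integral (linepath a0 b0) h =
           contour_integral (linepath a0 (complex_of_real a)) h + contour_integral (linepath (complex_of_real a) (complex_of_real b)) h
           + contour_integral (linepath (complex_of_real b) b0) h"
        using U N unfolding a0_def b0_def f_def by auto
      obtain \<gamma>l where gl: "valid_path \<gamma>l" "pathstart \<gamma>l = a0" "pathfinish \<gamma>l = b0" "path_image \<gamma>l \<subseteq> D"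
         "\<forall>z\<in>path_image \<gamma>l. Im z < 0 \<or> z = a0 \<or> z = b0"
         "\<forall>h. h holomorphic_on D \<longrightarrow> contour_integral \<gamma>l h = contour_integral (linepath a0 b0) h"
         "norm (contour_integral \<gamma>l (\<lambda>z. exp (of_nat N * \<psi>s N z) / (exp (2 * of_real pi * \<i> * of_nat N * z) - 1)))
           \<le> Ll * exp (- cl * real N)"
        using L N unfolding a0_def b0_def by auto
      have id: "lattice_sum a b N (\<psi>s N) = contour_integral (linepath a0 b0) f
          + contour_integral \<gamma>l (\<lambda>z. exp (of_nat N * \<psi>s N z) / (exp (2 * of_real pi * \<i> * of_nat N * z) - 1))
          + contour_integral \<gamma>u (\<lambda>z. exp (of_nat N * \<psi>s N z) / (exp (- 2 * of_real pi * \<i> * of_nat N * z) - 1))"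
        unfolding f_def
        by (rule main_identity[OF Npos A(1,2,3) A(5)[OF N1] A(4) gu(1-6) gl(1-6) a0_def b0_def])
      have segab: "path_image (linepath (complex_of_real a) (complex_of_real b)) \<subseteq> D"
      proof
        fix z assume "z \<in> path_image (linepath (complex_of_real a) (complex_of_real b))"
        then have z: "Im z = 0" "a \<le> Re z" "Re z \<le> b" using real_seg[of z a b] A(1) by auto
        then have "z = complex_of_real (Re z)" by (simp add: complex_eq_iff)
        then show "z \<in> D" using A(4) z by auto
      qed
      have "f contour_integrable_on linepath (complex_of_real a) (complex_of_real b)"
        by (rule contour_integrable_holomorphic_simple[OF fD A(2) valid_path_linepath segab])
      then have "(f has_contour_integral contour_integral (linepath (complex_of_real a) (complex_of_real b)) f) (linepath (complex_of_real a) (complex_of_real b))"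
        by (rule has_contour_integral_integral)
      then have "((\<lambda>x. f (complex_of_real x)) has_integral contour_integral (linepath (complex_of_real a) (complex_of_real b)) f) {a..b}"
        using has_contour_integral_linepath_Reals_iff[of "complex_of_real a" "complex_of_real b" f] A(1) by simp
      then have Iab: "integral {a..b} (\<lambda>t. exp (of_nat N * \<psi>s N (complex_of_real t))) = contour_integral (linepath (complex_of_real a) (complex_of_real b)) f"
        unfolding f_def by (rule integral_unique)
      have e1: "norm (contour_integral (linepath a0 (complex_of_real a)) f) \<le> exp (- cu * real N)"
      proof (rule seg_bound)
        show "\<forall>z\<in>closed_segment a0 (complex_of_real a). norm (f z) \<le> exp (- cu * real N)" using gu(8) by blast
        have "\<bar>a - hlo a N\<bar> \<le> 1"
        proof -
          have "1/(2*real N) \<le> 1" using Npos by (simp add: field_simps)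
          then show ?thesis using hlo_bounds[OF Npos, of a] by (auto simp: abs_if)
        qed
        then show "norm (complex_of_real a - a0) \<le> 1" unfolding a0_def by (simp flip: of_real_diff)
      qed simp
      have e2: "norm (contour_integral (linepath (complex_of_real b) b0) f) \<le> exp (- cu * real N)"
      proof (rule seg_bound)
        show "\<forall>z\<in>closed_segment (complex_of_real b) b0. norm (f z) \<le> exp (- cu * real N)" using gu(8) by blast
        have "\<bar>hhi b N - b\<bar> \<le> 1"
        proof -
          have "1/(2*real N) \<le> 1" using Npos by (simp add: field_simps)
          then show ?thesis using hhi_bounds[OF Npos, of b] by (auto simp: abs_if)
        qed
        then show "norm (b0 - complex_of_real b) \<le> 1" unfolding b0_def by (simp flip: of_real_diff)
      qed simp
      have ee: "exp (- cu * real N) \<le> exp (- \<epsilon> * real N)" "exp (- cl * real N) \<le> exp (- \<epsilon> * real N)"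
        using \<epsilon> by (auto intro!: mult_right_mono)
      have lu: "Lu * exp (- cu * real N) \<le> \<bar>Lu\<bar> * exp (- \<epsilon> * real N)"
        by (rule order.trans[OF mult_right_mono[of Lu "\<bar>Lu\<bar>"]]) (use ee in \<open>auto intro: mult_left_mono\<close>)
      have ll: "Ll * exp (- cl * real N) \<le> \<bar>Ll\<bar> * exp (- \<epsilon> * real N)"
        by (rule order.trans[OF mult_right_mono[of Ll "\<bar>Ll\<bar>"]]) (use ee in \<open>auto intro: mult_left_mono\<close>)
      have "lattice_sum a b N (\<psi>s N) - integral {a..b} (\<lambda>t. exp (of_nat N * \<psi>s N (complex_of_real t)))
          = contour_integral (linepath a0 (complex_of_real a)) f + contour_integral (linepath (complex_of_real b) b0) f
          + contour_integral \<gamma>l (\<lambda>z. exp (of_nat N * \<psi>s N z) / (exp (2 * of_real pi * \<i> * of_nat N * z) - 1))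
          + contour_integral \<gamma>u (\<lambda>z. exp (of_nat N * \<psi>s N z) / (exp (- 2 * of_real pi * \<i> * of_nat N * z) - 1))"
        unfolding id Iab using gu(9) fD by simp
      also have "norm \<dots> \<le> exp (- cu * real N) + exp (- cu * real N) + Ll * exp (- cl * real N) + Lu * exp (- cu * real N)"
        using e1 e2 gl(7) gu(7) by (smt (verit) norm_triangle_ineq)
      also have "\<dots> \<le> (\<bar>Lu\<bar> + \<bar>Ll\<bar> + 2) * exp (- \<epsilon> * real N)"
      proof -
        have "(\<bar>Lu\<bar> + \<bar>Ll\<bar> + 2) * exp (- \<epsilon> * real N) = \<bar>Lu\<bar> * exp (- \<epsilon> * real N) + \<bar>Ll\<bar> * exp (- \<epsilon> * real N) + 2 * exp (- \<epsilon> * real N)"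
          by (simp add: algebra_simps)
        then show ?thesis using ee lu ll by linarith
      qed
      finally show "norm (lattice_sum a b N (\<psi>s N) - integral {a..b} (\<lambda>t. exp (of_nat N * \<psi>s N (complex_of_real t))))
             \<le> (\<bar>Lu\<bar> + \<bar>Ll\<bar> + 2) * exp (- \<epsilon> * real N)" .
    qed
  qed
qed

end
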